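(* Let $p:\mathbb{R}\to\mathbb{R}$ be locally integrable, $\pi$-periodic, with $p_\alpha>0$ for almost all $\alpha$, and put $p_{\alpha,\beta}=p_\alpha p_\beta$. Let $\nu:\mathbb{R}\to\mathbb{R}$ be the unique bi-Lipschitz function with $\nu(0)=0$ and $\nu'(\alpha)=p_\alpha\bigl(\tfrac1{2\pi}\int_0^{2\pi}p_\beta\,d\beta\bigr)^{-1}$ for almost all $\alpha$. Then the path $\gamma(\alpha)=e^{i\nu(\alpha)}$ belongs to $B^\infty_{\rm ap}(\mathbb{R},\mathbb{R}^2)$ and \[ \omega_p(\gamma)=\sup_{\delta\in B^\infty_{\rm ap}(\mathbb{R},\mathbb{R}^2)}\omega_p(\delta)=\operatorname{Area}(\sigma|_{[0,2\pi]})=\frac1{4\pi}\Bigl(\int_0^{2\pi}p_\alpha\,d\alpha\Bigr)^2, \] where $\sigma(\alpha)=\frac12\int_\alpha^{\alpha+\pi}p_\beta\gamma(\beta)\,d\beta$. Moreover, every maximizer of $\omega_p$ on $B^\infty_{\rm ap}(\mathbb{R},\mathbb{R}^2)$ is of the form $\alpha\mapsto e^{i\nu(\alpha)+ic}$ for some $c\in\mathbb{R}$, and satisfies $|\gamma'(\alpha)|=\nu'(\alpha)=p_\alpha\bigl(\frac1{2\pi}\int_0^{2\pi}p_\beta\,d\beta\bigr)^{-1}$ for almost all $\alpha$.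
   Context: $\mathbb{R}^2$ is identified with $\mathbb{C}$, and for $v,w\in\mathbb{R}^2$, $v\times w=v_1w_2-v_2w_1$. $L^\infty_{\rm ap}(\mathbb{R},\mathbb{R}^2)$ is the space of essentially bounded measurable $\gamma:\mathbb{R}\to\mathbb{R}^2$ with $\gamma(\alpha+\pi)=-\gamma(\alpha)$ for all $\alpha$. $B^\infty_{\rm ap}(\mathbb{R},\mathbb{R}^2)$ is the subset with $\|\gamma_1^2+\gamma_2^2\|_\infty\le1$. For such $\gamma$, \[ \omega_p(\gamma)=\int_0^\pi\int_\alpha^\pi p_{\alpha,\beta}\,\gamma(\alpha)\times\gamma(\beta)\,d\beta\,d\alpha. \] For a Lipschitz path $\sigma$, $\operatorname{Area}(\sigma|_{[0,2\pi]})=\frac12\int_0^{2\pi}\sigma(\alpha)\times\sigma'(\alpha)\,d\alpha$ is the signed enclosed area. *)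

theory Defs
  imports "HOL-Analysis.Analysis"
begin

text \<open>R^2 is identified with the complex plane; the planar cross product.\<close>
definition cross2 :: "complex \<Rightarrow> complex \<Rightarrow> real" where
  "cross2 v w = Re v * Im w - Im v * Re w"

definition Bap :: "(real \<Rightarrow> complex) set" where
  "Bap = {g. g \<in> borel_measurable lebesgue
             \<and> (AE x in lebesgue. (Re (g x))\<^sup>2 + (Im (g x))\<^sup>2 \<le> 1)
             \<and> (\<forall>a. g (a + pi) = - g a)}"

definition omega :: "(real \<Rightarrow> real) \<Rightarrow> (real \<Rightarrow> complex) \<Rightarrow> real" where
  "omega p g = (\<integral>a\<in>{0..pi}. (\<integral>b\<in>{a..pi}. p a * p b * cross2 (g a) (g b) \<partial>lebesgue) \<partial>lebesgue)"

definition area02pi :: "(real \<Rightarrow> complex) \<Rightarrow> real" where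
  "area02pi s = (1/2) * (\<integral>a\<in>{0..2*pi}. cross2 (s a) (vector_derivative s (at a)) \<partial>lebesgue)"

end

theory Submission
  imports Defs
begin

lemma cot_deriv: fixes x :: real assumes "sin x \<noteq> 0"
  shows "((\<lambda>x. cos x / sin x) has_real_derivative (-1/(sin x)\<^sup>2)) (at x within S)"
proof -
  have "((\<lambda>x. cos x / sin x) has_real_derivative ((- sin x) * sin x - cos x * cos x) / (sin x * sin x)) (at x within S)"
    using assms by (intro derivative_eq_intros refl) auto
  moreover have "((- sin x) * sin x - cos x * cos x) = -1"
    by (simp add: algebra_simps)
  ultimately show ?thesis by (simp add: power2_eq_square)
qed

lemma aux_eq: fixes s c l U W :: real assumes s: "s \<noteq> 0" and sc: "s\<^sup>2 + c\<^sup>2 = 1"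
  shows "W\<^sup>2 - l\<^sup>2 * U\<^sup>2 = l * (- l / s\<^sup>2) * U\<^sup>2 + l * c / s * (2 * U * W) + (W - l * c / s * U)\<^sup>2"
proof -
  have "s\<^sup>2 * (W\<^sup>2 - l\<^sup>2 * U\<^sup>2) = s\<^sup>2 * (l * (- l / s\<^sup>2) * U\<^sup>2 + l * c / s * (2 * U * W) + (W - l * c / s * U)\<^sup>2)"
    using s sc by (simp add: field_simps power2_eq_square) algebra
  then show ?thesis using s by simp
qed

lemma piece:
  fixes u w :: "real \<Rightarrow> real" and l k a b :: real
  assumes ab: "a \<le> b" and l: "l > 0"
    and sinpos: "\<And>t. t \<in> {a..b} \<Longrightarrow> sin (l*t + k) > 0"
    and der: "\<And>t. t \<in> {a..b} \<Longrightarrow> (u has_real_derivative w t) (at t within {a..b})"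
    and cw: "continuous_on {a..b} w"
  shows "l * cos (l*b+k) / sin (l*b+k) * (u b)\<^sup>2 - l * cos (l*a+k) / sin (l*a+k) * (u a)\<^sup>2
     \<le> integral {a..b} (\<lambda>t. (w t)\<^sup>2 - l\<^sup>2 * (u t)\<^sup>2)"
proof -
  define F where "F t = l * (cos (l*t+k) / sin (l*t+k)) * (u t)\<^sup>2" for t
  define F' where "F' t = l * (- l / (sin (l*t+k))\<^sup>2) * (u t)\<^sup>2 + l * cos (l*t+k) / sin (l*t+k) * (2 * u t * w t)" for t
  define R where "R t = (w t - l * cos (l*t+k) / sin (l*t+k) * u t)\<^sup>2" for t
  have sne: "\<And>x. x\<in>{a..b} \<Longrightarrow> sin (l*x+k) \<noteq> 0" using sinpos by (metis less_irrefl)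
  have cu: "continuous_on {a..b} u"
    using der by (meson DERIV_continuous continuous_on_eq_continuous_within)
  have dF: "(F has_real_derivative F' t) (at t within {a..b})" if t: "t \<in> {a..b}" for t
  proof -
    have s: "sin (l*t+k) \<noteq> 0" using sinpos[OF t] by simp
    have c1: "((\<lambda>t. cos (l*t+k) / sin (l*t+k)) has_real_derivative (-1/(sin (l*t+k))\<^sup>2) * l) (at t within {a..b})"
      by (rule DERIV_chain2[where g="\<lambda>t. l*t+k" and x=t, OF cot_deriv[OF s, of UNIV]]) (auto intro!: derivative_eq_intros)
    have du2: "((\<lambda>t. (u t)\<^sup>2) has_real_derivative 2 * u t * w t) (at t within {a..b})"
      by (auto intro!: derivative_eq_intros der[OF t])
    have "((\<lambda>t. l * (cos (l*t+k) / sin (l*t+k)) * (u t)\<^sup>2) has_real_derivative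
      l * ((-1/(sin (l*t+k))\<^sup>2) * l) * (u t)\<^sup>2 + 2 * u t * w t * (l * (cos (l*t+k) / sin (l*t+k)))) (at t within {a..b})"
      by (rule DERIV_mult[OF DERIV_cmult[OF c1] du2])
    then show ?thesis unfolding F_def F'_def
      by (rule DERIV_cong) (simp add: field_simps)
  qed
  have ftc: "(F' has_integral (F b - F a)) {a..b}"
    using ab dF by (intro fundamental_theorem_of_calculus) (auto simp: has_real_derivative_iff_has_vector_derivative)
  have csin: "continuous_on {a..b} (\<lambda>t. l * cos (l*t+k) / sin (l*t+k))"
  proof -
    have "\<And>x. x\<in>{a..b} \<Longrightarrow> sin (l*x+k) \<noteq> 0" using sinpos by (metis less_irrefl)
    then show ?thesis by (auto intro!: continuous_intros)
  qed
  have cR: "continuous_on {a..b} R"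
    unfolding R_def using sne cu cw by (auto intro!: continuous_intros)
  have eq: "(w t)\<^sup>2 - l\<^sup>2 * (u t)\<^sup>2 = F' t + R t" if t: "t \<in> {a..b}" for t
    unfolding F'_def R_def using aux_eq[OF sne[OF t] sin_cos_squared_add[of "l*t+k"]] by simp
  have iR: "R integrable_on {a..b}" using cR integrable_continuous_interval by blast
  have R0: "0 \<le> integral {a..b} R"
    by (rule integral_nonneg[OF iR]) (simp add: R_def)
  have "integral {a..b} (\<lambda>t. (w t)\<^sup>2 - l\<^sup>2 * (u t)\<^sup>2) = integral {a..b} (\<lambda>t. F' t + R t)"
    using eq by (intro integral_cong) auto
  also have "\<dots> = (F b - F a) + integral {a..b} R"
    using ftc iR by (simp add: integral_add has_integral_integrable integral_unique)
  finally show ?thesis using R0 unfolding F_def by simp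
qed

lemma wirt_real:
  fixes u w :: "real \<Rightarrow> real"
  assumes der: "\<And>t. t \<in> {0..pi} \<Longrightarrow> (u has_real_derivative w t) (at t within {0..pi})"
    and cw: "continuous_on {0..pi} w"
    and anti: "u pi = - u 0"
  shows "integral {0..pi} (\<lambda>t. (u t)\<^sup>2) \<le> integral {0..pi} (\<lambda>t. (w t)\<^sup>2)"
proof -
  have cu: "continuous_on {0..pi} u"
    using der by (meson DERIV_continuous continuous_on_eq_continuous_within)
  obtain t0 where t0: "0 \<le> t0" "t0 \<le> pi" "u t0 = 0"
  proof (cases "u 0 \<le> 0")
    case True
    then show ?thesis using IVT'[of u 0 0 pi] cu anti that by auto
  next
    case False
    then show ?thesis using IVT2'[of u pi 0 0] cu anti that by auto
  qed
  have iu: "(\<lambda>t. (u t)\<^sup>2) integrable_on {0..pi}"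
    using cu by (intro integrable_continuous_interval continuous_intros)
  have iw: "(\<lambda>t. (w t)\<^sup>2) integrable_on {0..pi}"
    using cw by (intro integrable_continuous_interval continuous_intros)
  have key: "z * integral {0..pi} (\<lambda>t. (u t)\<^sup>2) \<le> integral {0..pi} (\<lambda>t. (w t)\<^sup>2)"
    if z: "0 < z" "z < 1" for z
  proof -
    define l where "l = sqrt z"
    have l: "0 < l" "l < 1" "l\<^sup>2 = z" using z by (auto simp: l_def real_less_lsqrt)
    define \<delta> where "\<delta> = (1 - l) * pi / 2"
    have dpos: "\<delta> > 0" using l by (simp add: \<delta>_def)
    have top: "l * pi + \<delta> < pi" using l pi_gt_zero by (simp add: \<delta>_def field_simps)
    have sin1: "sin (l*t + (\<delta> - l*t0)) > 0" if t: "t \<in> {t0..pi}" for t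
    proof (rule sin_gt_zero)
      have "0 \<le> l * (t - t0)" using t l by auto
      then show "0 < l*t + (\<delta> - l*t0)" using dpos by (simp add: algebra_simps)
      have "l * (t - t0) \<le> l * pi" using t t0 l by (intro mult_left_mono) auto
      then show "l*t + (\<delta> - l*t0) < pi" using top by (simp add: algebra_simps)
    qed
    have sin2: "sin (l*t + (l*(pi - t0) + \<delta>)) > 0" if t: "t \<in> {0..t0}" for t
    proof (rule sin_gt_zero)
      have "0 \<le> l * t" "0 \<le> l * (pi - t0)" using t t0 l by auto
      then show "0 < l*t + (l*(pi - t0) + \<delta>)" using dpos by simp
      have "l * t \<le> l * t0" using t l by (intro mult_left_mono) auto
      then show "l*t + (l*(pi - t0) + \<delta>) < pi" using top by (simp add: algebra_simps)
    qed
    have d1: "\<And>t. t \<in> {t0..pi} \<Longrightarrow> (u has_real_derivative w t) (at t within {t0..pi})"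
      using der t0 by (meson DERIV_subset atLeastAtMost_iff atLeastatMost_subset_iff order_refl subset_iff)
    have d2: "\<And>t. t \<in> {0..t0} \<Longrightarrow> (u has_real_derivative w t) (at t within {0..t0})"
      using der t0 by (meson DERIV_subset atLeastAtMost_iff atLeastatMost_subset_iff order_refl subset_iff)
    have P1: "l * cos (l*pi + (\<delta> - l*t0)) / sin (l*pi + (\<delta> - l*t0)) * (u pi)\<^sup>2
        - l * cos (l*t0 + (\<delta> - l*t0)) / sin (l*t0 + (\<delta> - l*t0)) * (u t0)\<^sup>2
     \<le> integral {t0..pi} (\<lambda>t. (w t)\<^sup>2 - l\<^sup>2 * (u t)\<^sup>2)"
      using t0 by (intro piece[OF t0(2) l(1) sin1 d1 continuous_on_subset[OF cw]]) auto
    have P2: "l * cos (l*t0 + (l*(pi - t0) + \<delta>)) / sin (l*t0 + (l*(pi - t0) + \<delta>)) * (u t0)\<^sup>2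
        - l * cos (l*0 + (l*(pi - t0) + \<delta>)) / sin (l*0 + (l*(pi - t0) + \<delta>)) * (u 0)\<^sup>2
     \<le> integral {0..t0} (\<lambda>t. (w t)\<^sup>2 - l\<^sup>2 * (u t)\<^sup>2)"
      using t0 by (intro piece[OF t0(1) l(1) sin2 d2 continuous_on_subset[OF cw]]) auto
    have e1: "l*pi + (\<delta> - l*t0) = l*(pi - t0) + \<delta>" by (simp add: algebra_simps)
    have e2: "(u pi)\<^sup>2 = (u 0)\<^sup>2" using anti by simp
    have i2: "(\<lambda>t. (w t)\<^sup>2 - l\<^sup>2 * (u t)\<^sup>2) integrable_on {0..pi}"
      using iu iw by (intro integrable_diff integrable_on_mult_right) auto
    have "0 \<le> integral {0..t0} (\<lambda>t. (w t)\<^sup>2 - l\<^sup>2 * (u t)\<^sup>2) + integral {t0..pi} (\<lambda>t. (w t)\<^sup>2 - l\<^sup>2 * (u t)\<^sup>2)"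
      using P1 P2 t0(3) unfolding e1 e2 by simp
    also have "\<dots> = integral {0..pi} (\<lambda>t. (w t)\<^sup>2 - l\<^sup>2 * (u t)\<^sup>2)"
      using t0 i2 by (intro Henstock_Kurzweil_Integration.integral_combine) auto
    also have "\<dots> = integral {0..pi} (\<lambda>t. (w t)\<^sup>2) - z * integral {0..pi} (\<lambda>t. (u t)\<^sup>2)"
      using iu iw l by (simp add: integral_diff integrable_on_mult_right integral_mult_right)
    finally show ?thesis by simp
  qed
  show ?thesis by (rule field_le_mult_one_interval) (rule key)
qed

definition Hf :: "(real \<Rightarrow> complex) \<Rightarrow> real \<Rightarrow> complex" where
  "Hf g s = integral {s..pi} g - integral {0..pi} g / 2"

lemma integral_Re_HK: "f integrable_on A \<Longrightarrow> integral A (\<lambda>x. Re (f x)) = Re (integral A f)"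
  by (metis has_integral_Re integrable_integral integral_unique)
lemma integral_Im_HK: "f integrable_on A \<Longrightarrow> integral A (\<lambda>x. Im (f x)) = Im (integral A f)"
  by (metis has_integral_Im integrable_integral integral_unique)

lemma Hf_alt:
  assumes "g integrable_on {0..pi}" "s \<in> {0..pi}"
  shows "Hf g s = integral {0..pi} g / 2 - integral {0..s} g"
proof -
  have "integral {0..s} g + integral {s..pi} g = integral {0..pi} g"
    using assms by (intro Henstock_Kurzweil_Integration.integral_combine) auto
  then have "integral {s..pi} g = integral {0..pi} g - integral {0..s} g" by (simp add: algebra_simps)
  then show ?thesis unfolding Hf_def by simp
qed

lemma wirt_comp:
  fixes v :: "real \<Rightarrow> real"
  assumes cv: "continuous_on {0..pi} v"
  shows "integral {0..pi} (\<lambda>s. (integral {0..pi} v / 2 - integral {0..s} v)\<^sup>2) \<le> integral {0..pi} (\<lambda>s. (v s)\<^sup>2)"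
proof -
  have "integral {0..pi} (\<lambda>s. (integral {0..pi} v / 2 - integral {0..s} v)\<^sup>2) \<le> integral {0..pi} (\<lambda>s. (- v s)\<^sup>2)"
  proof (rule wirt_real)
    fix t assume t: "t \<in> {0..pi}"
    have "((\<lambda>u. integral {0..u} v) has_real_derivative v t) (at t within {0..pi})"
      using integral_has_vector_derivative[OF cv t] by (simp add: has_real_derivative_iff_has_vector_derivative)
    then show "((\<lambda>s. integral {0..pi} v / 2 - integral {0..s} v) has_real_derivative - v t) (at t within {0..pi})"
      by (auto intro!: derivative_eq_intros)
  next
    show "continuous_on {0..pi} (\<lambda>t. - v t)" using cv by (intro continuous_intros)
  next
    show "integral {0..pi} v / 2 - integral {0..pi} v = - (integral {0..pi} v / 2 - integral {0..0} v)"
      by simp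
  qed
  then show ?thesis by simp
qed

lemma wirt_cont:
  assumes cg: "continuous_on {0..pi} g"
  shows "integral {0..pi} (\<lambda>s. (cmod (Hf g s))\<^sup>2) \<le> integral {0..pi} (\<lambda>s. (cmod (g s))\<^sup>2)"
proof -
  have ig: "g integrable_on {0..s}" if "s \<le> pi" for s
    using cg that by (intro integrable_continuous_interval) (auto intro: continuous_on_subset)
  have ig': "g integrable_on {0..pi}" using ig by simp
  have cRe: "continuous_on {0..pi} (\<lambda>s. Re (g s))" and cIm: "continuous_on {0..pi} (\<lambda>s. Im (g s))"
    using cg by (auto intro!: continuous_intros)
  have eRe: "Re (Hf g s) = integral {0..pi} (\<lambda>s. Re (g s)) / 2 - integral {0..s} (\<lambda>s. Re (g s))"
    if "s \<in> {0..pi}" for s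
    using that ig ig' by (simp add: Hf_alt integral_Re_HK)
  have eIm: "Im (Hf g s) = integral {0..pi} (\<lambda>s. Im (g s)) / 2 - integral {0..s} (\<lambda>s. Im (g s))"
    if "s \<in> {0..pi}" for s
    using that ig ig' by (simp add: Hf_alt integral_Im_HK)
  have cH: "continuous_on {0..pi} (Hf g)"
  proof -
    have "continuous_on {0..pi} (\<lambda>s. integral {s..pi} g - integral {0..pi} g / 2)"
      using indefinite_integral_continuous_1'[OF ig'] by (intro continuous_intros)
    then show ?thesis unfolding Hf_def[abs_def] .
  qed
  have i1: "(\<lambda>s. (Re (Hf g s))\<^sup>2) integrable_on {0..pi}" "(\<lambda>s. (Im (Hf g s))\<^sup>2) integrable_on {0..pi}"
    "(\<lambda>s. (Re (g s))\<^sup>2) integrable_on {0..pi}" "(\<lambda>s. (Im (g s))\<^sup>2) integrable_on {0..pi}"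
    using cH cg by (auto intro!: integrable_continuous_interval continuous_intros)
  have "integral {0..pi} (\<lambda>s. (Re (Hf g s))\<^sup>2) = integral {0..pi} (\<lambda>s. (integral {0..pi} (\<lambda>s. Re (g s)) / 2 - integral {0..s} (\<lambda>s. Re (g s)))\<^sup>2)"
    using eRe by (intro integral_cong) auto
  also have "\<dots> \<le> integral {0..pi} (\<lambda>s. (Re (g s))\<^sup>2)" by (rule wirt_comp[OF cRe])
  finally have r: "integral {0..pi} (\<lambda>s. (Re (Hf g s))\<^sup>2) \<le> integral {0..pi} (\<lambda>s. (Re (g s))\<^sup>2)" .
  have "integral {0..pi} (\<lambda>s. (Im (Hf g s))\<^sup>2) = integral {0..pi} (\<lambda>s. (integral {0..pi} (\<lambda>s. Im (g s)) / 2 - integral {0..s} (\<lambda>s. Im (g s)))\<^sup>2)"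
    using eIm by (intro integral_cong) auto
  also have "\<dots> \<le> integral {0..pi} (\<lambda>s. (Im (g s))\<^sup>2)" by (rule wirt_comp[OF cIm])
  finally have i: "integral {0..pi} (\<lambda>s. (Im (Hf g s))\<^sup>2) \<le> integral {0..pi} (\<lambda>s. (Im (g s))\<^sup>2)" .
  show ?thesis using r i i1 by (simp add: cmod_power2 integral_add)
qed

lemma dct_ae:
  fixes f :: "nat \<Rightarrow> real \<Rightarrow> 'a::euclidean_space"
  assumes fi: "\<And>k. f k integrable_on S" and hi: "h integrable_on S"
    and le: "\<And>k x. x \<in> S \<Longrightarrow> norm (f k x) \<le> h x"
    and N: "negligible N"
    and conv: "\<And>x. x \<in> S - N \<Longrightarrow> (\<lambda>k. f k x) \<longlonglongrightarrow> g x"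
  shows "g integrable_on S" "(\<lambda>k. integral S (f k)) \<longlonglongrightarrow> integral S g"
proof -
  have n1: "negligible {x \<in> S - (S - N). P x}" for P using N by (rule negligible_subset[of N]) auto
  have n2: "negligible {x \<in> (S - N) - S. P x}" for P
  proof -
    have e: "{x \<in> (S - N) - S. P x} = {}" by auto
    show ?thesis by (subst e) simp
  qed
  have fi': "f k integrable_on (S - N)" for k by (rule integrable_spike_set[OF fi n1 n2])
  have hi': "h integrable_on (S - N)" by (rule integrable_spike_set[OF hi n1 n2])
  note D = dominated_convergence[of f "S - N" h g, OF fi' hi' le conv]
  show "g integrable_on S" using D(1) by (rule integrable_spike_set) (use N in \<open>auto intro: negligible_subset\<close>)
  have "integral (S - N) (f k) = integral S (f k)" for k by (rule integral_spike_set) (use N in \<open>auto intro: negligible_subset\<close>)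
  moreover have "integral (S - N) g = integral S g" by (rule integral_spike_set) (use N in \<open>auto intro: negligible_subset\<close>)
  ultimately show "(\<lambda>k. integral S (f k)) \<longlonglongrightarrow> integral S g" using D(2) by simp
qed

lemma bdd_meas_absint:
  fixes f :: "real \<Rightarrow> 'a::euclidean_space"
  assumes "f \<in> borel_measurable (lebesgue_on {a..b})" "\<And>x. x \<in> {a..b} \<Longrightarrow> norm (f x) \<le> B"
  shows "f absolutely_integrable_on {a..b}"
  by (rule measurable_bounded_by_integrable_imp_absolutely_integrable[OF assms(1) _ _ assms(2)])
     (auto intro: integrable_continuous_interval continuous_on_const)

definition rclamp :: "complex \<Rightarrow> complex" where
  "rclamp z = z / of_real (max 1 (cmod z))"

lemma rclamp_cont: "continuous_on UNIV rclamp"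
proof -
  have "max 1 (cmod z) \<noteq> 0" for z by (metis max.cobounded1 not_one_le_zero)
  then have "\<And>z. (of_real (max 1 (cmod z)) :: complex) \<noteq> 0" by simp
  then show ?thesis unfolding rclamp_def[abs_def] by (intro continuous_intros) auto
qed

lemma rclamp_bound: "cmod (rclamp z) \<le> 1"
  by (simp add: rclamp_def norm_divide max_def)

lemma rclamp_id: "cmod z \<le> 1 \<Longrightarrow> rclamp z = z"
  by (simp add: rclamp_def max_def)

lemma Hf_bound:
  assumes "g integrable_on {0..pi}" "\<And>s. s \<in> {0..pi} \<Longrightarrow> cmod (g s) \<le> 1" "s \<in> {0..pi}"
  shows "cmod (Hf g s) \<le> 2 * pi"
proof -
  have "g integrable_on {s..pi}" using assms by (auto intro: integrable_on_subinterval)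
  then have "cmod (integral {s..pi} g) \<le> integral {s..pi} (\<lambda>_. 1::real)"
    using assms by (intro integral_norm_bound_integral) (auto intro: integrable_continuous_interval)
  also have "\<dots> \<le> pi" using assms by simp
  finally have a: "cmod (integral {s..pi} g) \<le> pi" .
  have "cmod (integral {0..pi} g) \<le> integral {0..pi} (\<lambda>_. 1::real)"
    using assms by (intro integral_norm_bound_integral) (auto intro: integrable_continuous_interval)
  then have b: "cmod (integral {0..pi} g) \<le> pi" by simp
  have "cmod (Hf g s) \<le> cmod (integral {s..pi} g) + cmod (integral {0..pi} g / 2)"
    unfolding Hf_def by (rule norm_triangle_ineq4)
  then show ?thesis using a b pi_gt_zero by (simp add: norm_divide, linarith)
qed

lemma wirt_gen:
  assumes ig: "g absolutely_integrable_on {0..pi}" and bd: "\<And>s. s \<in> {0..pi} \<Longrightarrow> cmod (g s) \<le> 1"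
  shows "integral {0..pi} (\<lambda>s. (cmod (Hf g s))\<^sup>2) \<le> integral {0..pi} (\<lambda>s. (cmod (g s))\<^sup>2)"
proof -
  have gm: "g \<in> borel_measurable (lebesgue_on {0..pi})"
    using ig by (simp add: absolutely_integrable_measurable)
  then have "g measurable_on {0..pi}"
    by (simp add: measurable_on_iff_borel_measurable)
  then obtain N h where N: "negligible N" and ch: "\<And>n. continuous_on UNIV (h n)"
    and conv: "\<And>x. x \<notin> N \<Longrightarrow> (\<lambda>n. h n x) \<longlonglongrightarrow> (if x \<in> {0..pi} then g x else 0)"
    unfolding measurable_on_def by blast
  define gn where "gn n x = rclamp (h n x)" for n x
  have cgn: "continuous_on UNIV (gn n)" for n
    unfolding gn_def[abs_def] by (rule continuous_on_compose2[OF rclamp_cont ch]) auto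
  have cgn': "continuous_on {0..pi} (gn n)" for n using cgn by (rule continuous_on_subset) auto
  have gnb: "cmod (gn n x) \<le> 1" for n x unfolding gn_def by (rule rclamp_bound)
  have gnc: "(\<lambda>n. gn n x) \<longlonglongrightarrow> g x" if "x \<in> {0..pi} - N" for x
  proof -
    have "(\<lambda>n. rclamp (h n x)) \<longlonglongrightarrow> rclamp (g x)"
      using conv[of x] that rclamp_cont
      by (auto intro: continuous_on_tendsto_compose[of UNIV rclamp])
    then show ?thesis using rclamp_id[OF bd] that unfolding gn_def by auto
  qed
  have igi: "g integrable_on {0..pi}" using ig by (simp add: absolutely_integrable_on_def)
  have ign: "gn n integrable_on T" if "T \<subseteq> {0..pi}" "T = {a..b}" for n T a b
    using cgn that by (auto intro: integrable_continuous_interval continuous_on_subset)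
  have c1: "(\<lambda>n. integral {s..pi} (gn n)) \<longlonglongrightarrow> integral {s..pi} g" if "s \<in> {0..pi}" for s
    using that by (intro dct_ae(2)[of "\<lambda>n. gn n" "{s..pi}" "\<lambda>_. 1" N g] ign N gnb gnc)
      (auto intro: integrable_continuous_interval)
  have c2: "(\<lambda>n. integral {0..pi} (gn n)) \<longlonglongrightarrow> integral {0..pi} g" using c1[of 0] by simp
  have cH: "(\<lambda>n. Hf (gn n) s) \<longlonglongrightarrow> Hf g s" if "s \<in> {0..pi}" for s
    unfolding Hf_def using c1[OF that] c2 by (intro tendsto_intros) auto
  have Hb: "cmod (Hf (gn n) s) \<le> 2 * pi" if "s \<in> {0..pi}" for n s
    using that by (intro Hf_bound[of "gn n"] ign gnb) auto
  have cHn: "continuous_on {0..pi} (Hf (gn n))" for n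
  proof -
    have "continuous_on {0..pi} (\<lambda>s. integral {s..pi} (gn n) - integral {0..pi} (gn n) / 2)"
      using indefinite_integral_continuous_1'[OF ign[of "{0..pi}"]] by (intro continuous_intros) auto
    then show ?thesis unfolding Hf_def[abs_def] .
  qed
  have lim1: "(\<lambda>n. integral {0..pi} (\<lambda>s. (cmod (Hf (gn n) s))\<^sup>2)) \<longlonglongrightarrow> integral {0..pi} (\<lambda>s. (cmod (Hf g s))\<^sup>2)"
  proof (rule dct_ae(2)[of _ _ "\<lambda>_. (2*pi)\<^sup>2" "{}"])
    show "(\<lambda>s. (cmod (Hf (gn n) s))\<^sup>2) integrable_on {0..pi}" for n
      using cHn by (intro integrable_continuous_interval continuous_intros)
    show "(\<lambda>_. (2*pi)\<^sup>2) integrable_on {0..pi}" by (intro integrable_continuous_interval continuous_intros)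
    show "norm ((cmod (Hf (gn n) x))\<^sup>2) \<le> (2*pi)\<^sup>2" if "x \<in> {0..pi}" for n x
    proof -
      have "(cmod (Hf (gn n) x))\<^sup>2 \<le> (2*pi)\<^sup>2" using Hb[OF that, of n] by (intro power_mono) auto
      then show ?thesis by simp
    qed
    show "(\<lambda>n. (cmod (Hf (gn n) x))\<^sup>2) \<longlonglongrightarrow> (cmod (Hf g x))\<^sup>2" if "x \<in> {0..pi} - {}" for x
      using cH[of x] that by (intro tendsto_intros) auto
  qed auto
  have lim2: "(\<lambda>n. integral {0..pi} (\<lambda>s. (cmod (gn n s))\<^sup>2)) \<longlonglongrightarrow> integral {0..pi} (\<lambda>s. (cmod (g s))\<^sup>2)"
  proof (rule dct_ae(2)[of _ _ "\<lambda>_. 1" N])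
    show "(\<lambda>s. (cmod (gn n s))\<^sup>2) integrable_on {0..pi}" for n
      using cgn' by (intro integrable_continuous_interval continuous_intros)
    show "(\<lambda>_. 1::real) integrable_on {0..pi}" by (intro integrable_continuous_interval continuous_intros)
    show "norm ((cmod (gn n x))\<^sup>2) \<le> 1" if "x \<in> {0..pi}" for n x
      using gnb[of n x] by (simp add: power_le_one)
    show "(\<lambda>n. (cmod (gn n x))\<^sup>2) \<longlonglongrightarrow> (cmod (g x))\<^sup>2" if "x \<in> {0..pi} - N" for x
      using gnc[OF that] by (intro tendsto_intros)
  qed (use N in auto)
  show ?thesis
    by (rule LIMSEQ_le[OF lim1 lim2]) (use wirt_cont[OF cgn'] in auto)
qed

lemma AE_negl:
  assumes "AE x in lebesgue. P x"
  obtains N where "negligible N" "\<And>x. x \<notin> N \<Longrightarrow> P x"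
proof -
  from assms obtain N where N: "{x \<in> space lebesgue. \<not> P x} \<subseteq> N" "emeasure lebesgue N = 0" "N \<in> sets lebesgue"
    by (auto elim!: AE_E)
  then have "N \<in> null_sets lebesgue" by auto
  then have "negligible N" by (simp add: negligible_iff_null_sets)
  then show ?thesis using that N by auto
qed

lemma negl_AE:
  assumes "negligible N" "\<And>x. x \<notin> N \<Longrightarrow> P x"
  shows "AE x in lebesgue. P x"
proof (rule AE_I')
  show "N \<in> null_sets lebesgue" using assms by (simp add: negligible_iff_null_sets)
qed (use assms in auto)

lemma zero_int_negl:
  fixes f :: "real \<Rightarrow> real"
  assumes f: "f absolutely_integrable_on S" and nn: "\<And>x. x \<in> S \<Longrightarrow> 0 \<le> f x" and z: "integral S f = 0"
  shows "negligible {x \<in> S. f x \<noteq> 0}"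
proof -
  have i: "integrable lebesgue (\<lambda>x. indicator S x *\<^sub>R f x)" using f by (simp add: set_integrable_def)
  have "(LINT x:S|lebesgue. f x) = 0" using set_lebesgue_integral_eq_integral(2)[OF f] z by simp
  then have "integral\<^sup>L lebesgue (\<lambda>x. indicator S x *\<^sub>R f x) = 0" by (simp add: set_lebesgue_integral_def)
  moreover have "AE x in lebesgue. 0 \<le> indicator S x *\<^sub>R f x" using nn by (auto simp: indicator_def)
  ultimately have "AE x in lebesgue. indicator S x *\<^sub>R f x = 0"
    using integral_nonneg_eq_0_iff_AE[OF i] by simp
  then obtain N where N: "negligible N" "\<And>x. x \<notin> N \<Longrightarrow> indicator S x *\<^sub>R f x = 0"
    by (rule AE_negl) blast
  have "{x \<in> S. f x \<noteq> 0} \<subseteq> N" using N(2) by (force simp: indicator_def)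
  then show ?thesis using N(1) negligible_subset by blast
qed

lemma cross2_add: "cross2 z (a + b) = cross2 z a + cross2 z b"
  by (simp add: cross2_def algebra_simps)
lemma cross2_self: "cross2 z z = 0"
  by (simp add: cross2_def)
lemma cross2_scale: "cross2 z (of_real r * w) = r * cross2 z w"
  by (simp add: cross2_def algebra_simps)
lemma cross2_scaleR: "cross2 z (r *\<^sub>R w) = r * cross2 z w"
  by (simp add: cross2_def algebra_simps scaleR_conv_of_real)
lemma cross2_scale_left: "cross2 (of_real r * z) w = r * cross2 z w"
  by (simp add: cross2_def algebra_simps)
lemma bl_cross2_left: "bounded_linear (\<lambda>z. cross2 z w)"
  unfolding cross2_def
  by (intro bounded_linear_sub bounded_linear_compose[OF bounded_linear_mult_left] bounded_linear_Re bounded_linear_Im)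
lemma bl_cross2_right: "bounded_linear (\<lambda>w. cross2 z w)"
  unfolding cross2_def
  by (intro bounded_linear_sub bounded_linear_compose[OF bounded_linear_mult_right] bounded_linear_Re bounded_linear_Im)
lemma cross2_ident: "cross2 a b = ((cmod a)\<^sup>2 + (cmod b)\<^sup>2) / 2 - (cmod (b - \<i> * a))\<^sup>2 / 2"
  by (simp only: cmod_power2) (simp add: cross2_def power2_eq_square field_simps)

lemma core:
  assumes ig: "g absolutely_integrable_on {0..pi}" and bd: "\<And>s. s \<in> {0..pi} \<Longrightarrow> cmod (g s) \<le> 1"
  shows core_le: "integral {0..pi} (\<lambda>s. cross2 (g s) (integral {s..pi} g)) \<le> pi"
    and core_eq: "integral {0..pi} (\<lambda>s. cross2 (g s) (integral {s..pi} g)) = pi \<Longrightarrow>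
       \<exists>c N. negligible N \<and> (\<forall>s\<in>{0..pi} - N. g s = exp (\<i> * of_real (s + c)))"
proof -
  define V where "V = integral {0..pi} g"
  define H where "H = Hf g"
  define A where "A s = (cmod (g s))\<^sup>2" for s
  define B where "B s = (cmod (H s))\<^sup>2" for s
  define C where "C s = (cmod (H s - \<i> * g s))\<^sup>2" for s
  have igi: "g integrable_on {0..pi}" using ig by (simp add: absolutely_integrable_on_def)
  have gm[measurable]: "g \<in> borel_measurable (lebesgue_on {0..pi})"
    using ig by (simp add: absolutely_integrable_measurable)
  have cH: "continuous_on {0..pi} H"
  proof -
    have "continuous_on {0..pi} (\<lambda>s. integral {s..pi} g - integral {0..pi} g / 2)"
      using indefinite_integral_continuous_1'[OF igi] by (intro continuous_intros) auto
    then show ?thesis unfolding H_def Hf_def[abs_def] .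
  qed
  have Hm[measurable]: "H \<in> borel_measurable (lebesgue_on {0..pi})"
    using cH by (intro continuous_imp_measurable_on_sets_lebesgue) auto
  have Hb: "cmod (H s) \<le> 2 * pi" if "s \<in> {0..pi}" for s
    unfolding H_def using Hf_bound[OF igi bd that] .
  have Ai: "A absolutely_integrable_on {0..pi}"
  proof (rule bdd_meas_absint[where B=1])
    show "A \<in> borel_measurable (lebesgue_on {0..pi})" unfolding A_def by measurable
    show "norm (A x) \<le> 1" if "x \<in> {0..pi}" for x using bd[OF that] by (simp add: A_def power_le_one)
  qed
  have Bi: "B absolutely_integrable_on {0..pi}"
  proof (rule bdd_meas_absint[where B="(2*pi)\<^sup>2"])
    show "B \<in> borel_measurable (lebesgue_on {0..pi})" unfolding B_def by measurable
    show "norm (B x) \<le> (2*pi)\<^sup>2" if "x \<in> {0..pi}" for x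
      using power_mono[OF Hb[OF that], of 2] by (simp add: B_def)
  qed
  have Ci: "C absolutely_integrable_on {0..pi}"
  proof (rule bdd_meas_absint[where B="(2*pi+1)\<^sup>2"])
    show "C \<in> borel_measurable (lebesgue_on {0..pi})" unfolding C_def by measurable
    show "norm (C x) \<le> (2*pi+1)\<^sup>2" if "x \<in> {0..pi}" for x
    proof -
      have "cmod (H x - \<i> * g x) \<le> cmod (H x) + cmod (\<i> * g x)" by (rule norm_triangle_ineq4)
      also have "\<dots> \<le> 2*pi + 1" using Hb[OF that] bd[OF that] by (simp add: norm_mult)
      finally show ?thesis using power_mono[of "cmod (H x - \<i> * g x)" "2*pi+1" 2] by (simp add: C_def)
    qed
  qed
  have Aint: "A integrable_on {0..pi}" "B integrable_on {0..pi}" "C integrable_on {0..pi}"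
    using Ai Bi Ci by (auto simp: absolutely_integrable_on_def)
  have split: "cross2 (g s) (integral {s..pi} g) = (A s + B s) / 2 - C s / 2 + cross2 (g s) (V / 2)" for s
  proof -
    have "integral {s..pi} g = H s + V / 2" by (simp add: H_def Hf_def V_def)
    then have "cross2 (g s) (integral {s..pi} g) = cross2 (g s) (H s) + cross2 (g s) (V/2)"
      by (simp add: cross2_add)
    then show ?thesis using cross2_ident[of "g s" "H s"] by (simp add: A_def B_def C_def)
  qed
  have lin0: "integral {0..pi} (\<lambda>s. cross2 (g s) (V / 2)) = 0"
  proof -
    have "integral {0..pi} ((\<lambda>z. cross2 z (V / 2)) \<circ> g) = cross2 V (V / 2)"
      unfolding V_def by (rule integral_linear[OF igi bl_cross2_left])
    also have "\<dots> = 0" using cross2_scale[of V "1/2" V] cross2_self[of V] by simp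
    finally show ?thesis by (simp add: o_def)
  qed
  have lini: "(\<lambda>s. cross2 (g s) (V / 2)) integrable_on {0..pi}"
    using integrable_linear[OF igi bl_cross2_left] by (simp add: o_def)
  have Omega: "integral {0..pi} (\<lambda>s. cross2 (g s) (integral {s..pi} g))
      = (integral {0..pi} A + integral {0..pi} B) / 2 - integral {0..pi} C / 2"
  proof -
    have "integral {0..pi} (\<lambda>s. cross2 (g s) (integral {s..pi} g))
        = integral {0..pi} (\<lambda>s. (A s + B s) / 2 - C s / 2 + cross2 (g s) (V / 2))"
      by (simp add: split)
    also have "\<dots> = (integral {0..pi} A + integral {0..pi} B) / 2 - integral {0..pi} C / 2"
      using Aint lini lin0
      by (simp add: integral_add integral_diff integrable_add integrable_diff integrable_on_divide)
    finally show ?thesis .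
  qed
  have AB: "integral {0..pi} B \<le> integral {0..pi} A"
    using wirt_gen[OF ig bd] unfolding A_def[abs_def] B_def[abs_def] H_def by simp
  have Api: "integral {0..pi} A \<le> pi"
  proof -
    have "integral {0..pi} A \<le> integral {0..pi} (\<lambda>_. 1::real)"
      using Aint bd by (intro integral_le) (auto intro: integrable_continuous_interval simp: A_def power_le_one)
    then show ?thesis by simp
  qed
  have C0: "0 \<le> integral {0..pi} C" using Aint by (intro integral_nonneg) (auto simp: C_def)
  have "(integral {0..pi} A + integral {0..pi} B) / 2 - integral {0..pi} C / 2 \<le> pi"
    using AB Api C0 by argo
  then show "integral {0..pi} (\<lambda>s. cross2 (g s) (integral {s..pi} g)) \<le> pi"
    using Omega by simp
  assume eqpi: "integral {0..pi} (\<lambda>s. cross2 (g s) (integral {s..pi} g)) = pi"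
  have Cz: "integral {0..pi} C = 0" and Ap: "integral {0..pi} A = pi"
    using AB Api C0 eqpi unfolding Omega by argo+
  have N1: "negligible {s \<in> {0..pi}. C s \<noteq> 0}"
    by (rule zero_int_negl[OF Ci _ Cz]) (simp add: C_def)
  define N where "N = {s \<in> {0..pi}. C s \<noteq> 0}"
  have gH: "g s = - \<i> * H s" if "s \<in> {0..pi} - N" for s
  proof -
    have "H s - \<i> * g s = 0" using that by (simp add: N_def C_def)
    then have "H s = \<i> * g s" by simp
    then show ?thesis by simp
  qed
  have Nn: "negligible N" using N1 by (simp add: N_def)
  define F where "F t = - \<i> * H t" for t
  have cF: "continuous_on {0..pi} F" unfolding F_def using cH by (intro continuous_intros)
  have iF: "F integrable_on {0..pi}" using cF by (rule integrable_continuous_interval)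
  define H2 where "H2 s = (integral {0..pi} F - V/2) - integral {0..s} F" for s
  have HH2: "H s = H2 s" if s: "s \<in> {0..pi}" for s
  proof -
    have "integral {s..pi} g = integral {s..pi} F"
      using Nn s by (intro integral_spike[of N]) (auto simp: F_def gH)
    moreover have "integral {0..s} F + integral {s..pi} F = integral {0..pi} F"
      using s iF by (intro Henstock_Kurzweil_Integration.integral_combine) auto
    ultimately show ?thesis unfolding H2_def H_def Hf_def V_def by (simp add: algebra_simps)
  qed
  have dH2: "(H2 has_vector_derivative \<i> * H s) (at s within {0..pi})" if s: "s \<in> {0..pi}" for s
  proof -
    have "(H2 has_vector_derivative (0 - F s)) (at s within {0..pi})"
      unfolding H2_def[abs_def]
      by (intro has_vector_derivative_diff has_vector_derivative_const integral_has_vector_derivative[OF cF s])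
    then show ?thesis by (simp add: F_def)
  qed
  have dE: "((\<lambda>s. exp (- \<i> * of_real s)) has_vector_derivative (- \<i> * exp (- \<i> * of_real s))) (at s within {0..pi})" for s
  proof -
    have "((\<lambda>z. exp (- \<i> * z)) has_field_derivative (- \<i> * exp (- \<i> * of_real s))) (at (of_real s))"
      by (auto intro!: derivative_eq_intros)
    then show ?thesis by (rule has_vector_derivative_real_field)
  qed
  define K where "K s = exp (- \<i> * of_real s) * H2 s" for s
  have dK: "(K has_vector_derivative 0) (at s within {0..pi})" if s: "s \<in> {0..pi}" for s
  proof -
    have "(K has_vector_derivative (exp (- \<i> * of_real s) * (\<i> * H s) + (- \<i> * exp (- \<i> * of_real s)) * H2 s)) (at s within {0..pi})"
      unfolding K_def[abs_def] by (rule has_vector_derivative_mult[OF dE dH2[OF s]])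
    then show ?thesis using HH2[OF s] by (simp add: algebra_simps)
  qed
  obtain c0 where c0: "\<And>s. s \<in> {0..pi} \<Longrightarrow> K s = c0"
    using has_vector_derivative_zero_constant[of "{0..pi}" K] dK by (metis convex_real_interval(5))
  have Hform: "H s = exp (\<i> * of_real s) * c0" if s: "s \<in> {0..pi}" for s
  proof -
    have "exp (\<i> * of_real s) * K s = H2 s"
      unfolding K_def by (simp add: mult.assoc[symmetric] exp_add[symmetric])
    then show ?thesis using c0[OF s] HH2[OF s] by simp
  qed
  have gform: "g s = - \<i> * c0 * exp (\<i> * of_real s)" if s: "s \<in> {0..pi} - N" for s
    using gH[OF s] Hform[of s] s by (simp add: algebra_simps)
  have "integral {0..pi} A = integral {0..pi} (\<lambda>_. (cmod c0)\<^sup>2)"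
    using Nn by (intro integral_spike[of N]) (auto simp: A_def gform norm_mult)
  then have "(cmod c0)\<^sup>2 * pi = pi" using Ap by simp
  then have "(cmod c0)\<^sup>2 = 1" using pi_gt_zero by simp
  then have nc0: "cmod (- \<i> * c0) = 1" by (simp add: norm_mult power2_eq_1_iff) (metis norm_ge_zero neg_0_le_iff_le le_minus_one_simps(3))
  define c where "c = Arg (- \<i> * c0)"
  have "cis c = - \<i> * c0"
    unfolding c_def using nc0 by (subst cis_Arg) (auto simp: sgn_div_norm)
  then have ec: "exp (\<i> * of_real c) = - \<i> * c0" by (simp add: cis_conv_exp mult.commute)
  show "\<exists>c N. negligible N \<and> (\<forall>s\<in>{0..pi} - N. g s = exp (\<i> * of_real (s + c)))"
  proof (intro exI conjI ballI)
    show "negligible N" by (rule Nn)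
    fix s assume s: "s \<in> {0..pi} - N"
    have "exp (\<i> * of_real (s + c)) = exp (\<i> * of_real s) * exp (\<i> * of_real c)"
      by (simp add: distrib_left exp_add)
    then show "g s = exp (\<i> * of_real (s + c))" using gform[OF s] ec by (simp add: mult.commute)
  qed
qed

locale L39 =
  fixes p :: "real \<Rightarrow> real" and \<nu> :: "real \<Rightarrow> real" and m :: real
  assumes p_locint: "\<And>a b. set_integrable lebesgue {a..b} p"
    and p_per: "\<And>x. p (x + pi) = p x"
    and p_pos: "AE x in lebesgue. p x > 0"
    and \<nu>_bilip: "\<exists>L>0. \<forall>x y. \<bar>x - y\<bar> \<le> L * \<bar>\<nu> x - \<nu> y\<bar> \<and> \<bar>\<nu> x - \<nu> y\<bar> \<le> L * \<bar>x - y\<bar>"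
    and \<nu>0: "\<nu> 0 = 0"
    and m_def: "m = (1 / (2*pi)) * (\<integral>b\<in>{0..2*pi}. p b \<partial>lebesgue)"
    and \<nu>_deriv: "AE x in lebesgue. (\<nu> has_real_derivative p x / m) (at x)"
begin

definition q where "q x = p x / m"

lemma p_ai: "p absolutely_integrable_on {a..b}"
  using p_locint by simp

lemma p_int: "p integrable_on {a..b}"
  using p_ai by (simp add: absolutely_integrable_on_def)

lemma not_negl_ivl: "a < b \<Longrightarrow> \<not> negligible {a..(b::real)}"
  using negligible_interval(1)[of a b] by auto

lemma m_pos: "m > 0"
proof -
  obtain Np where Np: "negligible Np" "\<And>x. x \<notin> Np \<Longrightarrow> p x > 0"
    using p_pos by (rule AE_negl) blast
  define p' where "p' x = (if x \<in> Np then 1 else p x)" for x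
  have p'pos: "p' x > 0" for x using Np by (simp add: p'_def)
  have ai': "p' absolutely_integrable_on {0..2*pi}"
    by (rule absolutely_integrable_spike[OF p_ai Np(1)]) (simp add: p'_def)
  have eqi: "integral {0..2*pi} p = integral {0..2*pi} p'"
    by (rule integral_spike[OF Np(1)]) (simp add: p'_def)
  have I: "(\<integral>b\<in>{0..2*pi}. p b \<partial>lebesgue) = integral {0..2*pi} p"
    using set_lebesgue_integral_eq_integral(2)[OF p_locint] .
  have ge: "integral {0..2*pi} p' \<ge> 0"
    using ai' p'pos by (intro integral_nonneg) (auto simp: absolutely_integrable_on_def less_imp_le)
  have "integral {0..2*pi} p' \<noteq> 0"
  proof
    assume "integral {0..2*pi} p' = 0"
    then have "negligible {x \<in> {0..2*pi}. p' x \<noteq> 0}"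
      using zero_int_negl[OF ai'] p'pos less_imp_le by blast
    moreover have "{x \<in> {0..2*pi}. p' x \<noteq> 0} = {0..2*pi}" using p'pos by (auto simp: less_imp_neq[symmetric])
    ultimately show False using not_negl_ivl[of 0 "2*pi"] by simp
  qed
  then have "integral {0..2*pi} p > 0" using ge eqi by simp
  then show ?thesis unfolding m_def I by simp
qed

definition S0 where "S0 = {x. 0 < q x \<and> (\<nu> has_real_derivative q x) (at x)}"

lemma S0_negl: "negligible (- S0)"
proof -
  have "AE x in lebesgue. 0 < q x \<and> (\<nu> has_real_derivative q x) (at x)"
  proof -
    have "AE x in lebesgue. p x > 0 \<and> (\<nu> has_real_derivative p x / m) (at x)"
      using p_pos \<nu>_deriv by (rule eventually_conj)
    then show ?thesis by (rule eventually_mono) (auto simp: q_def m_pos)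
  qed
  then obtain N where N: "negligible N" "\<And>x. x \<notin> N \<Longrightarrow> 0 < q x \<and> (\<nu> has_real_derivative q x) (at x)"
    by (rule AE_negl) blast
  have "- S0 \<subseteq> N" using N(2) by (auto simp: S0_def)
  then show ?thesis using N(1) negligible_subset by blast
qed

lemma S0_sets: "S0 \<in> sets lebesgue"
proof -
  have "- S0 \<in> sets lebesgue" using S0_negl by (rule negligible_imp_sets)
  then have "UNIV - (- S0) \<in> sets lebesgue" by (intro sets.Diff) auto
  then show ?thesis by (simp add: Diff_eq)
qed

lemma obtain_L: obtains L where "L > 0" "\<And>x y. \<bar>x - y\<bar> \<le> L * \<bar>\<nu> x - \<nu> y\<bar>" "\<And>x y. \<bar>\<nu> x - \<nu> y\<bar> \<le> L * \<bar>x - y\<bar>"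
  using \<nu>_bilip by blast

lemma \<nu>_inj: "inj \<nu>"
proof (rule injI)
  fix x y assume "\<nu> x = \<nu> y"
  obtain L where "L > 0" "\<And>x y. \<bar>x - y\<bar> \<le> L * \<bar>\<nu> x - \<nu> y\<bar>" by (rule obtain_L) blast
  then have "\<bar>x - y\<bar> \<le> 0" using \<open>\<nu> x = \<nu> y\<close> by (metis diff_self abs_zero mult_zero_right)
  then show "x = y" by simp
qed

lemma \<nu>_cont: "continuous_on A \<nu>"
proof -
  obtain L where L: "L > 0" "\<And>x y. \<bar>\<nu> x - \<nu> y\<bar> \<le> L * \<bar>x - y\<bar>" by (rule obtain_L) blast
  have "L-lipschitz_on A \<nu>"
    using L by (intro lipschitz_onI) (auto simp: dist_real_def)
  then show ?thesis by (rule lipschitz_on_continuous_on)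
qed

lemma S0_ne: "\<exists>x. x \<in> S0"
proof (rule ccontr)
  assume "\<nexists>x. x \<in> S0"
  then have "- S0 = UNIV" by auto
  then have "negligible (UNIV :: real set)" using S0_negl by simp
  then have "negligible {0..(1::real)}" using negligible_subset by blast
  then show False using not_negl_ivl[of 0 1] by simp
qed

lemma \<nu>_mono_triple: "x < y \<Longrightarrow> y < z \<Longrightarrow> (\<nu> x < \<nu> y \<longleftrightarrow> \<nu> x < \<nu> z) \<and> (\<nu> x < \<nu> y \<longleftrightarrow> \<nu> y < \<nu> z)"
  using continuous_inj_imp_mono[of x y z \<nu>] \<nu>_cont inj_on_subset[OF \<nu>_inj]
  by auto

lemma \<nu>_mono_all: "a < b \<Longrightarrow> c < d \<Longrightarrow> (\<nu> a < \<nu> b \<longleftrightarrow> \<nu> c < \<nu> d)"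
proof -
  assume ab: "a < b" and cd: "c < d"
  define lo where "lo = min a c - 1"
  define hi where "hi = max b d + 1"
  have o: "lo < a" "a < hi" "lo < c" "c < hi" "b < hi" "d < hi" using ab cd by (auto simp: lo_def hi_def)
  have 1: "\<nu> a < \<nu> b \<longleftrightarrow> \<nu> a < \<nu> hi" using \<nu>_mono_triple[OF ab o(5)] by blast
  have 2: "\<nu> a < \<nu> hi \<longleftrightarrow> \<nu> lo < \<nu> hi" using \<nu>_mono_triple[OF o(1) o(2)] by blast
  have 3: "\<nu> c < \<nu> d \<longleftrightarrow> \<nu> c < \<nu> hi" using \<nu>_mono_triple[OF cd o(6)] by blast
  have 4: "\<nu> c < \<nu> hi \<longleftrightarrow> \<nu> lo < \<nu> hi" using \<nu>_mono_triple[OF o(3) o(4)] by blast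
  show ?thesis using 1 2 3 4 by blast
qed

lemma \<nu>_strict: "x < y \<Longrightarrow> \<nu> x < \<nu> y"
proof -
  assume xy: "x < y"
  obtain x0 where x0: "x0 \<in> S0" using S0_ne by blast
  then have d: "(\<nu> has_real_derivative q x0) (at x0)" "q x0 > 0" by (auto simp: S0_def)
  obtain dd where dd: "dd > 0" "\<And>h. h > 0 \<Longrightarrow> h < dd \<Longrightarrow> \<nu> x0 < \<nu> (x0 + h)"
    using DERIV_pos_inc_right[OF d] by blast
  have "\<nu> x0 < \<nu> (x0 + dd/2)" using dd by simp
  then show ?thesis using \<nu>_mono_all[of x0 "x0 + dd/2" x y] xy dd by simp
qed

lemma \<nu>_le_iff: "\<nu> x \<le> \<nu> y \<longleftrightarrow> x \<le> y"
proof
  assume a: "\<nu> x \<le> \<nu> y"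
  show "x \<le> y"
  proof (rule ccontr)
    assume "\<not> x \<le> y"
    then have "\<nu> y < \<nu> x" by (intro \<nu>_strict) simp
    then show False using a by simp
  qed
next
  assume "x \<le> y"
  then show "\<nu> x \<le> \<nu> y" using \<nu>_strict[of x y] by (cases "x = y") auto
qed

lemma \<nu>_image_ivl: "\<nu> ` {a..b} = {\<nu> a..\<nu> b}"
proof
  show "\<nu> ` {a..b} \<subseteq> {\<nu> a..\<nu> b}" by (auto simp: \<nu>_le_iff)
  show "{\<nu> a..\<nu> b} \<subseteq> \<nu> ` {a..b}"
  proof
    fix y assume y: "y \<in> {\<nu> a..\<nu> b}"
    then have "\<nu> a \<le> \<nu> b" by auto
    then have "a \<le> b" by (simp add: \<nu>_le_iff)
    then obtain x where "a \<le> x" "x \<le> b" "\<nu> x = y"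
      using IVT'[of \<nu> a y b] y \<nu>_cont by auto
    then show "y \<in> \<nu> ` {a..b}" by auto
  qed
qed

lemma \<nu>_negl_image: "negligible N \<Longrightarrow> negligible (\<nu> ` N)"
proof -
  assume N: "negligible N"
  obtain L where L: "L > 0" "\<And>x y. \<bar>\<nu> x - \<nu> y\<bar> \<le> L * \<bar>x - y\<bar>" by (rule obtain_L) blast
  show ?thesis
  proof (rule negligible_locally_Lipschitz_image[OF _ N])
    fix x assume "x \<in> N"
    show "\<exists>T B. open T \<and> x \<in> T \<and> (\<forall>y\<in>N \<inter> T. norm (\<nu> y - \<nu> x) \<le> B * norm (y - x))"
      using L by (intro exI[of _ UNIV] exI[of _ L]) auto
  qed auto
qed

lemma \<nu>_negl_vimage: "negligible N \<Longrightarrow> negligible (\<nu> -` N)"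
proof -
  assume N: "negligible N"
  obtain L where L: "L > 0" "\<And>x y. \<bar>x - y\<bar> \<le> L * \<bar>\<nu> x - \<nu> y\<bar>" by (rule obtain_L) blast
  have "negligible (inv \<nu> ` (N \<inter> range \<nu>))"
  proof (rule negligible_locally_Lipschitz_image)
    show "negligible (N \<inter> range \<nu>)" using N by (rule negligible_subset) auto
    fix y assume "y \<in> N \<inter> range \<nu>"
    then obtain x where x: "y = \<nu> x" by auto
    show "\<exists>T B. open T \<and> y \<in> T \<and> (\<forall>z\<in>(N \<inter> range \<nu>) \<inter> T. norm (inv \<nu> z - inv \<nu> y) \<le> B * norm (z - y))"
    proof (intro exI[of _ UNIV] exI[of _ L] conjI ballI)
      fix z assume "z \<in> (N \<inter> range \<nu>) \<inter> UNIV"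
      then obtain w where w: "z = \<nu> w" by auto
      show "norm (inv \<nu> z - inv \<nu> y) \<le> L * norm (z - y)"
        using L(2)[of w x] by (simp add: x w inv_f_f[OF \<nu>_inj])
    qed auto
  qed auto
  moreover have "\<nu> -` N \<subseteq> inv \<nu> ` (N \<inter> range \<nu>)"
  proof
    fix x assume x: "x \<in> \<nu> -` N"
    have "x = inv \<nu> (\<nu> x)" by (simp add: inv_f_f[OF \<nu>_inj])
    moreover have "\<nu> x \<in> N \<inter> range \<nu>" using x by auto
    ultimately show "x \<in> inv \<nu> ` (N \<inter> range \<nu>)" by blast
  qed
  ultimately show ?thesis using negligible_subset by blast
qed

end

lemma negl1: "S \<subseteq> T \<Longrightarrow> negligible {x \<in> S - T. P x}"
proof -
  assume "S \<subseteq> T"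
  then have e: "{x \<in> S - T. P x} = {}" by auto
  show ?thesis by (subst e) simp
qed

lemma negl2: "negligible (T - S) \<Longrightarrow> negligible {x \<in> T - S. P x}"
  by (rule negligible_subset) auto

context L39 begin

lemma sub:
  fixes F :: "real \<Rightarrow> 'a::euclidean_space"
  assumes ab: "a \<le> b"
  shows sub_ai: "F absolutely_integrable_on {\<nu> a..\<nu> b} \<longleftrightarrow> (\<lambda>x. q x *\<^sub>R F (\<nu> x)) absolutely_integrable_on {a..b}"
    and sub_int: "F absolutely_integrable_on {\<nu> a..\<nu> b} \<Longrightarrow> integral {a..b} (\<lambda>x. q x *\<^sub>R F (\<nu> x)) = integral {\<nu> a..\<nu> b} F"
proof -
  define S where "S = {a..b} \<inter> S0"
  have Sm: "S \<in> sets lebesgue" unfolding S_def using S0_sets by auto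
  have der: "(\<nu> has_field_derivative q x) (at x within S)" if "x \<in> S" for x
    using that by (auto simp: S_def S0_def intro: has_field_derivative_at_within)
  have inj: "inj_on \<nu> S" using \<nu>_inj by (rule inj_on_subset) auto
  have qpos: "x \<in> S \<Longrightarrow> \<bar>q x\<bar> = q x" for x by (auto simp: S_def S0_def)
  have nS: "negligible ({a..b} - S)" using S0_negl by (rule negligible_subset) (auto simp: S_def)
  have nS': "negligible ({\<nu> a..\<nu> b} - \<nu> ` S)"
  proof -
    have "{\<nu> a..\<nu> b} - \<nu> ` S \<subseteq> \<nu> ` (- S0)"
    proof
      fix y assume y: "y \<in> {\<nu> a..\<nu> b} - \<nu> ` S"
      then have "y \<in> \<nu> ` {a..b}" using \<nu>_image_ivl[of a b] by auto
      then obtain x where x: "x \<in> {a..b}" "y = \<nu> x" by auto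
      then have "x \<notin> S0" using y by (auto simp: S_def)
      then show "y \<in> \<nu> ` (- S0)" using x by auto
    qed
    then show ?thesis using \<nu>_negl_image[OF S0_negl] negligible_subset by blast
  qed
  have sub1: "S \<subseteq> {a..b}" by (auto simp: S_def)
  have sub2: "\<nu> ` S \<subseteq> {\<nu> a..\<nu> b}" using \<nu>_image_ivl[of a b] sub1 by auto
  have e1: "(\<lambda>x. \<bar>q x\<bar> *\<^sub>R F (\<nu> x)) absolutely_integrable_on S \<longleftrightarrow> (\<lambda>x. q x *\<^sub>R F (\<nu> x)) absolutely_integrable_on S"
    by (rule absolutely_integrable_spike_eq[of "{}"]) (auto simp: qpos)
  have e2: "(\<lambda>x. q x *\<^sub>R F (\<nu> x)) absolutely_integrable_on S \<longleftrightarrow> (\<lambda>x. q x *\<^sub>R F (\<nu> x)) absolutely_integrable_on {a..b}"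
    by (rule absolutely_integrable_spike_set_eq[OF negl1[OF sub1] negl2[OF nS]])
  have e3: "F absolutely_integrable_on \<nu> ` S \<longleftrightarrow> F absolutely_integrable_on {\<nu> a..\<nu> b}"
    by (rule absolutely_integrable_spike_set_eq[OF negl1[OF sub2] negl2[OF nS']])
  have CV1: "F absolutely_integrable_on \<nu> ` S \<longleftrightarrow> (\<lambda>x. \<bar>q x\<bar> *\<^sub>R F (\<nu> x)) absolutely_integrable_on S"
    by (rule absolutely_integrable_change_of_variables_real[OF Sm der inj])
  show "F absolutely_integrable_on {\<nu> a..\<nu> b} \<longleftrightarrow> (\<lambda>x. q x *\<^sub>R F (\<nu> x)) absolutely_integrable_on {a..b}"
    using CV1 e1 e2 e3 by blast
  assume Fi: "F absolutely_integrable_on {\<nu> a..\<nu> b}"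

  have "integral S (\<lambda>x. \<bar>q x\<bar> *\<^sub>R F (\<nu> x)) = integral (\<nu> ` S) F"
    using has_absolute_integral_change_of_variables_real[OF Sm der inj, of F "integral (\<nu> ` S) F"] Fi e3 by blast
  moreover have "integral S (\<lambda>x. \<bar>q x\<bar> *\<^sub>R F (\<nu> x)) = integral S (\<lambda>x. q x *\<^sub>R F (\<nu> x))"
    by (rule integral_cong) (simp add: qpos)
  moreover have "integral S (\<lambda>x. q x *\<^sub>R F (\<nu> x)) = integral {a..b} (\<lambda>x. q x *\<^sub>R F (\<nu> x))"
    by (rule integral_spike_set[OF negl1[OF sub1] negl2[OF nS]])
  moreover have "integral (\<nu> ` S) F = integral {\<nu> a..\<nu> b} F"
    by (rule integral_spike_set[OF negl1[OF sub2] negl2[OF nS']])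
  ultimately show "integral {a..b} (\<lambda>x. q x *\<^sub>R F (\<nu> x)) = integral {\<nu> a..\<nu> b} F" by simp
qed

end

context L39 begin

lemma q_ai: "q absolutely_integrable_on {a..b}"
proof -
  have "(\<lambda>x. (1/m) *\<^sub>R p x) absolutely_integrable_on {a..b}"
    using p_ai by (rule absolutely_integrable_scaleR_left)
  then show ?thesis by (simp add: q_def[abs_def] divide_inverse mult.commute)
qed

lemma q_int: "q integrable_on {a..b}"
  using q_ai by (simp add: absolutely_integrable_on_def)

lemma ftc: assumes "a \<le> b" shows "integral {a..b} q = \<nu> b - \<nu> a"
proof -
  have le: "\<nu> a \<le> \<nu> b" using assms by (simp add: \<nu>_le_iff)
  have c: "(\<lambda>_. 1::real) absolutely_integrable_on {\<nu> a..\<nu> b}"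
    by (rule bdd_meas_absint[where B=1]) simp_all
  have "integral {a..b} (\<lambda>x. q x *\<^sub>R (1::real)) = integral {\<nu> a..\<nu> b} (\<lambda>_. 1::real)"
    by (rule sub_int[OF assms c])
  then show ?thesis using le by simp
qed

lemma int_p_2pi: "integral {0..2*pi} p = 2 * pi * m"
proof -
  have "(\<integral>b\<in>{0..2*pi}. p b \<partial>lebesgue) = integral {0..2*pi} p"
    using set_lebesgue_integral_eq_integral(2)[OF p_locint] .
  then show ?thesis using m_def by simp
qed

lemma q_per: "q (x + pi) = q x" by (simp add: q_def p_per)

lemma \<nu>_shift: "\<nu> (x + pi) = \<nu> x + pi"
proof -
  define w where "w x = \<nu> (x + pi) - \<nu> x" for x
  have wc: "w y = w x" if "x \<le> y" for x y
  proof -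
    have "integral {x..y} (q \<circ> (+) pi) = integral {x+pi..y+pi} q" by (rule integral_shift_Icc_real)
    moreover have "q \<circ> (+) pi = q"
    proof
      fix t show "(q \<circ> (+) pi) t = q t" using q_per[of t] by (simp add: add.commute)
    qed
    ultimately have "integral {x..y} q = integral {x+pi..y+pi} q" by simp
    then show ?thesis using ftc[OF that] ftc[of "x+pi" "y+pi"] that by (simp add: w_def)
  qed
  have wconst: "w x = w 0" for x
  proof (cases "x \<le> 0")
    case True then show ?thesis using wc[of x 0] by simp
  next
    case False then show ?thesis using wc[of 0 x] by simp
  qed
  have "integral {0..2*pi} q = 2 * pi"
  proof -
    have "integral {0..2*pi} q = integral {0..2*pi} (\<lambda>x. p x / m)" by (simp add: q_def[abs_def])
    also have "\<dots> = integral {0..2*pi} p / m" by (simp add: integral_divide p_int)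
    also have "\<dots> = 2 * pi" using int_p_2pi m_pos by simp
    finally show ?thesis .
  qed
  then have "\<nu> (2*pi) = 2 * pi" using ftc[of 0 "2*pi"] \<nu>0 by simp
  moreover have "\<nu> (2*pi) = w pi + \<nu> pi" by (simp add: w_def)
  moreover have "w pi = \<nu> pi" using wconst[of pi] \<nu>0 by (simp add: w_def)
  ultimately have "\<nu> pi = pi" by simp
  then have "w 0 = pi" using \<nu>0 by (simp add: w_def)
  then show ?thesis using wconst[of x] by (simp add: w_def)
qed

lemma \<nu>_pi: "\<nu> pi = pi" using \<nu>_shift[of 0] \<nu>0 by simp

end

lemma cross2_Im: "cross2 z w = Im (cnj z * w)"
  by (simp add: cross2_def algebra_simps)

lemma cross2_bound: "\<bar>cross2 z w\<bar> \<le> cmod z * cmod w"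
  using abs_Im_le_cmod[of "cnj z * w"] by (simp add: cross2_Im norm_mult)

context L39 begin

lemma \<nu>_nonneg: "0 \<le> x \<Longrightarrow> 0 \<le> \<nu> x" using \<nu>_le_iff[of 0 x] \<nu>0 by simp
lemma \<nu>_le_pi: "x \<le> pi \<Longrightarrow> \<nu> x \<le> pi" using \<nu>_le_iff[of x pi] \<nu>_pi by simp

lemma reduce:
  assumes gi: "g absolutely_integrable_on {0..pi}" and gb: "\<And>s. s \<in> {0..pi} \<Longrightarrow> cmod (g s) \<le> 1"
    and N: "negligible N" and rel: "\<And>x. x \<in> {0..pi} - N \<Longrightarrow> g (\<nu> x) = d x"
  shows "omega p d = m\<^sup>2 * integral {0..pi} (\<lambda>s. cross2 (g s) (integral {s..pi} g))"
proof -
  define E where "E a = integral {a..pi} (\<lambda>b. p b *\<^sub>R d b)" for a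
  define \<Phi> where "\<Phi> s = cross2 (g s) (integral {s..pi} g)" for s
  have pq: "p x = m * q x" for x using m_pos by (simp add: q_def)
  have gi': "g absolutely_integrable_on {\<nu> a..pi}" if "a \<in> {0..pi}" for a
    using gi by (rule absolutely_integrable_on_subinterval) (use that \<nu>_nonneg in auto)
  have inner: "(\<lambda>b. p b *\<^sub>R d b) absolutely_integrable_on {a..pi} \<and> E a = m *\<^sub>R integral {\<nu> a..pi} g"
    if a: "a \<in> {0..pi}" for a
  proof -
    have ap: "a \<le> pi" using a by simp
    have s1: "(\<lambda>x. q x *\<^sub>R g (\<nu> x)) absolutely_integrable_on {a..pi}"
      using sub_ai[OF ap, of g] gi'[OF a] \<nu>_pi by simp
    have s2: "integral {a..pi} (\<lambda>x. q x *\<^sub>R g (\<nu> x)) = integral {\<nu> a..pi} g"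
      using sub_int[OF ap, of g] gi'[OF a] \<nu>_pi by simp
    have sp: "p b *\<^sub>R d b = m *\<^sub>R (q b *\<^sub>R g (\<nu> b))" if "b \<in> {a..pi} - N" for b
      using that a rel[of b] by (simp add: pq)
    have "(\<lambda>b. p b *\<^sub>R d b) absolutely_integrable_on {a..pi}"
      by (rule absolutely_integrable_spike[OF absolutely_integrable_scaleR_left[OF s1] N]) (use sp in auto)
    moreover have "E a = integral {a..pi} (\<lambda>b. m *\<^sub>R (q b *\<^sub>R g (\<nu> b)))"
      unfolding E_def by (rule integral_spike[OF N]) (use sp in auto)
    moreover have "integral {a..pi} (\<lambda>b. m *\<^sub>R (q b *\<^sub>R g (\<nu> b))) = m *\<^sub>R integral {a..pi} (\<lambda>b. q b *\<^sub>R g (\<nu> b))"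
      by (rule integral_cmul)
    ultimately show ?thesis using s2 by metis
  qed
  have inner2: "(\<integral>b\<in>{a..pi}. p a * p b * cross2 (d a) (d b) \<partial>lebesgue) = p a * cross2 (d a) (E a)"
    if a: "a \<in> {0..pi}" for a
  proof -
    have bl: "bounded_linear (\<lambda>w. p a * cross2 (d a) w)"
      by (rule bounded_linear_compose[OF bounded_linear_mult_right bl_cross2_right])
    have ai: "(\<lambda>b. p a * cross2 (d a) (p b *\<^sub>R d b)) absolutely_integrable_on {a..pi}"
      using absolutely_integrable_linear[OF conjunct1[OF inner[OF a]] bl] by (simp add: o_def)
    have "(\<integral>b\<in>{a..pi}. p a * p b * cross2 (d a) (d b) \<partial>lebesgue) = (\<integral>b\<in>{a..pi}. p a * cross2 (d a) (p b *\<^sub>R d b) \<partial>lebesgue)"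
      by (simp add: cross2_scaleR mult.assoc)
    also have "\<dots> = integral {a..pi} (\<lambda>b. p a * cross2 (d a) (p b *\<^sub>R d b))"
      by (rule set_lebesgue_integral_eq_integral(2)[OF ai])
    also have "\<dots> = p a * cross2 (d a) (E a)"
      unfolding E_def
      using integral_linear[OF set_lebesgue_integral_eq_integral(1)[OF conjunct1[OF inner[OF a]]] bl]
      by (simp add: o_def)
    finally show ?thesis .
  qed
  have cG: "continuous_on {0..pi} (\<lambda>s. integral {s..pi} g)"
    using gi by (intro indefinite_integral_continuous_1') (simp add: absolutely_integrable_on_def)
  have gm[measurable]: "g \<in> borel_measurable (lebesgue_on {0..pi})"
    using gi by (simp add: absolutely_integrable_measurable)
  have Gm[measurable]: "(\<lambda>s. integral {s..pi} g) \<in> borel_measurable (lebesgue_on {0..pi})"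
    using cG by (intro continuous_imp_measurable_on_sets_lebesgue) auto
  have Gb: "cmod (integral {s..pi} g) \<le> pi" if "s \<in> {0..pi}" for s
  proof -
    have "cmod (integral {s..pi} g) \<le> integral {s..pi} (\<lambda>_. 1::real)"
      using that gb gi by (intro integral_norm_bound_integral)
        (auto intro: integrable_continuous_interval integrable_on_subinterval simp: absolutely_integrable_on_def)
    then show ?thesis using that by simp
  qed
  have \<Phi>ai: "\<Phi> absolutely_integrable_on {0..pi}"
  proof (rule bdd_meas_absint[where B=pi])
    show "\<Phi> \<in> borel_measurable (lebesgue_on {0..pi})" unfolding \<Phi>_def cross2_def by measurable
    show "norm (\<Phi> x) \<le> pi" if "x \<in> {0..pi}" for x
    proof -
      have "\<bar>\<Phi> x\<bar> \<le> cmod (g x) * cmod (integral {x..pi} g)" unfolding \<Phi>_def by (rule cross2_bound)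
      also have "\<dots> \<le> 1 * pi" using gb[OF that] Gb[OF that] by (intro mult_mono) auto
      finally show ?thesis by simp
    qed
  qed
  have s3: "(\<lambda>x. q x *\<^sub>R \<Phi> (\<nu> x)) absolutely_integrable_on {0..pi}"
    using sub_ai[of 0 pi \<Phi>] \<Phi>ai \<nu>0 \<nu>_pi by simp
  have s4: "integral {0..pi} (\<lambda>x. q x *\<^sub>R \<Phi> (\<nu> x)) = integral {0..pi} \<Phi>"
    using sub_int[of 0 pi \<Phi>] \<Phi>ai \<nu>0 \<nu>_pi by simp
  have outer: "p a * cross2 (d a) (E a) = m\<^sup>2 *\<^sub>R (q a *\<^sub>R \<Phi> (\<nu> a))" if a: "a \<in> {0..pi} - N" for a
  proof -
    have a': "a \<in> {0..pi}" using a by simp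
    have "E a = m *\<^sub>R integral {\<nu> a..pi} g" using inner[OF a'] by simp
    then show ?thesis using rel[OF a] by (simp add: pq \<Phi>_def cross2_scaleR power2_eq_square)
  qed
  have oai: "(\<lambda>a. p a * cross2 (d a) (E a)) absolutely_integrable_on {0..pi}"
    by (rule absolutely_integrable_spike[OF absolutely_integrable_scaleR_left[OF s3] N]) (use outer in auto)
  have "omega p d = (\<integral>a\<in>{0..pi}. p a * cross2 (d a) (E a) \<partial>lebesgue)"
    unfolding omega_def by (rule set_lebesgue_integral_cong) (auto simp: inner2)
  also have "\<dots> = integral {0..pi} (\<lambda>a. p a * cross2 (d a) (E a))"
    by (rule set_lebesgue_integral_eq_integral(2)[OF oai])
  also have "\<dots> = integral {0..pi} (\<lambda>a. m\<^sup>2 *\<^sub>R (q a *\<^sub>R \<Phi> (\<nu> a)))"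
    by (rule integral_spike[OF N]) (use outer in auto)
  also have "\<dots> = m\<^sup>2 * integral {0..pi} \<Phi>" using s4 by simp
  finally show ?thesis unfolding \<Phi>_def .
qed

end

lemma exp_int:
  assumes "a \<le> b"
  shows "integral {a..b} (\<lambda>t. exp (\<i> * of_real t)) = - \<i> * (exp (\<i> * of_real b) - exp (\<i> * of_real a))"
proof -
  have "((\<lambda>t. - \<i> * exp (\<i> * of_real t)) has_vector_derivative exp (\<i> * of_real t)) (at t within {a..b})" for t
  proof -
    have "((\<lambda>z. - \<i> * exp (\<i> * z)) has_field_derivative exp (\<i> * of_real t)) (at (of_real t))"
      by (auto intro!: derivative_eq_intros simp: mult.assoc)
    then show ?thesis by (rule has_vector_derivative_real_field)
  qed
  then have "((\<lambda>t. exp (\<i> * of_real t)) has_integral (- \<i> * exp (\<i> * of_real b) - (- \<i> * exp (\<i> * of_real a)))) {a..b}"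
    using assms by (intro fundamental_theorem_of_calculus) auto
  then show ?thesis by (simp add: integral_unique algebra_simps)
qed

lemma int_1_cos: "integral {0..pi} (\<lambda>s. 1 + cos s) = pi"
proof -
  have "((\<lambda>s. 1 + cos s) has_integral ((pi + sin pi) - (0 + sin 0))) {0..pi}"
    by (intro fundamental_theorem_of_calculus)
       (auto intro!: derivative_eq_intros simp: has_real_derivative_iff_has_vector_derivative[symmetric])
  then show ?thesis by (simp add: integral_unique)
qed

lemma Phi_exp: "integral {0..pi} (\<lambda>s. cross2 (exp (\<i> * of_real s)) (integral {s..pi} (\<lambda>t. exp (\<i> * of_real t)))) = pi"
proof -
  have "cross2 (exp (\<i> * of_real s)) (integral {s..pi} (\<lambda>t. exp (\<i> * of_real t))) = 1 + cos s"
    if "s \<in> {0..pi}" for s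
  proof -
    have "integral {s..pi} (\<lambda>t. exp (\<i> * of_real t)) = - \<i> * (exp (\<i> * of_real pi) - exp (\<i> * of_real s))"
      using that by (intro exp_int) auto
    then show ?thesis
      by (simp add: cross2_def Re_exp Im_exp algebra_simps power2_eq_square[symmetric])
  qed
  then have "integral {0..pi} (\<lambda>s. cross2 (exp (\<i> * of_real s)) (integral {s..pi} (\<lambda>t. exp (\<i> * of_real t))))
      = integral {0..pi} (\<lambda>s. 1 + cos s)" by (intro integral_cong) auto
  then show ?thesis using int_1_cos by simp
qed

lemma cmod_le1: "(Re z)\<^sup>2 + (Im z)\<^sup>2 \<le> 1 \<Longrightarrow> cmod z \<le> 1"
  by (metis abs_norm_cancel abs_square_le_1 cmod_power2)

lemma shift_nat: assumes inv: "\<And>x. P (x + pi) \<longleftrightarrow> P x" shows "P (x + of_nat n * pi) \<longleftrightarrow> P x"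
proof (induction n)
  case 0 then show ?case by simp
next
  case (Suc n)
  have e: "x + of_nat (Suc n) * pi = (x + of_nat n * pi) + pi" by (simp add: algebra_simps)
  have a: "P ((x + of_nat n * pi) + pi) = P (x + of_nat n * pi)" by (rule inv)
  show ?case unfolding e using a Suc.IH by (rule trans)
qed

lemma shift_int: assumes "\<And>x. P (x + pi) \<longleftrightarrow> P x" shows "P (x + of_int k * pi) \<longleftrightarrow> P x"
proof (cases "k \<ge> 0")
  case True
  then have "k = int (nat k)" by simp
  then show ?thesis using shift_nat[of P x "nat k", OF assms] by (metis of_int_of_nat_eq)
next
  case False
  then have k: "k = - int (nat (-k))" by simp
  have "P ((x + of_int k * pi) + of_nat (nat (-k)) * pi) \<longleftrightarrow> P (x + of_int k * pi)"
    using shift_nat[of P, OF assms] by blast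
  moreover have "(x + of_int k * pi) + of_nat (nat (-k)) * pi = x"
    by (subst k) (simp add: algebra_simps)
  ultimately show ?thesis by simp
qed

lemma periodic_negl:
  assumes inv: "\<And>x. x \<in> B \<longleftrightarrow> x + pi \<in> B" and n0: "negligible (B \<inter> {0..pi})"
  shows "negligible B"
proof -
  define B0 where "B0 = B \<inter> {0..pi}"
  have sub: "B \<subseteq> \<Union> (range (\<lambda>k::int. (+) (of_int k * pi) ` B0))"
  proof
    fix x assume x: "x \<in> B"
    define k where "k = \<lfloor>x / pi\<rfloor>"
    have k1: "of_int k * pi \<le> x" using pi_gt_zero unfolding k_def
      by (metis floor_divide_lower)
    have k2: "x < (of_int k + 1) * pi" using pi_gt_zero unfolding k_def
      by (metis floor_divide_upper)
    define y where "y = x + of_int (-k) * pi"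
    have "y \<in> B \<longleftrightarrow> x \<in> B" unfolding y_def by (rule shift_int[of "\<lambda>x. x \<in> B"]) (use inv in auto)
    then have "y \<in> B0" using x k1 k2 by (auto simp: B0_def y_def algebra_simps)
    moreover have "x = of_int k * pi + y" by (simp add: y_def)
    ultimately show "x \<in> \<Union> (range (\<lambda>k::int. (+) (of_int k * pi) ` B0))" by blast
  qed
  have "negligible (\<Union> (range (\<lambda>k::int. (+) (of_int k * pi) ` B0)))"
    using n0 unfolding B0_def by (intro negligible_countable_Union) (auto intro: negligible_translation)
  then show ?thesis using sub negligible_subset by blast
qed

context L39 begin

definition \<gamma> where "\<gamma> a = exp (\<i> * complex_of_real (\<nu> a))"

lemma \<gamma>_cont: "continuous_on A \<gamma>"
  unfolding \<gamma>_def[abs_def] using \<nu>_cont[of A] by (intro continuous_intros)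

lemma \<gamma>_Bap: "\<gamma> \<in> Bap"
  unfolding Bap_def
proof (intro CollectI conjI allI)
  have "\<gamma> \<in> borel_measurable (lebesgue_on UNIV)"
    by (intro continuous_imp_measurable_on_sets_lebesgue \<gamma>_cont) auto
  then show "\<gamma> \<in> borel_measurable lebesgue" by (simp add: lebesgue_on_UNIV_eq)
  show "AE x in lebesgue. (Re (\<gamma> x))\<^sup>2 + (Im (\<gamma> x))\<^sup>2 \<le> 1"
    by (simp add: \<gamma>_def Re_exp Im_exp)
  fix a show "\<gamma> (a + pi) = - \<gamma> a"
    by (simp add: \<gamma>_def \<nu>_shift distrib_left exp_add)
qed

lemma omega_\<gamma>: "omega p \<gamma> = m\<^sup>2 * pi"
proof -
  have "omega p \<gamma> = m\<^sup>2 * integral {0..pi} (\<lambda>s. cross2 (exp (\<i> * of_real s)) (integral {s..pi} (\<lambda>t. exp (\<i> * of_real t))))"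
  proof (rule reduce[of _ "{}"])
    show "(\<lambda>s. exp (\<i> * complex_of_real s)) absolutely_integrable_on {0..pi}"
      by (intro absolutely_integrable_continuous_real continuous_intros)
  qed (auto simp: \<gamma>_def)
  then show ?thesis using Phi_exp by simp
qed

lemma Bap_g:
  assumes d: "d \<in> Bap"
  obtains g Nd where "g absolutely_integrable_on {0..pi}" "\<And>s. s \<in> {0..pi} \<Longrightarrow> cmod (g s) \<le> 1"
    "negligible Nd" "\<And>x. x \<notin> Nd \<Longrightarrow> g (\<nu> x) = d x"
proof -
  have dm: "d \<in> borel_measurable lebesgue" and dae: "AE x in lebesgue. (Re (d x))\<^sup>2 + (Im (d x))\<^sup>2 \<le> 1"
    using d by (auto simp: Bap_def)
  obtain Nd where Nd: "negligible Nd" "\<And>x. x \<notin> Nd \<Longrightarrow> (Re (d x))\<^sup>2 + (Im (d x))\<^sup>2 \<le> 1"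
    using dae by (rule AE_negl) blast
  define dd where "dd x = (if cmod (d x) \<le> 1 then d x else 0)" for x
  define g where "g s = dd (inv \<nu> s)" for s
  have gnu: "g (\<nu> x) = dd x" for x by (simp add: g_def inv_f_f[OF \<nu>_inj])
  have gb: "cmod (g s) \<le> 1" for s by (simp add: g_def dd_def)
  have rel: "g (\<nu> x) = d x" if "x \<notin> Nd" for x using cmod_le1[OF Nd(2)[OF that]] by (simp add: gnu dd_def)
  have dm'[measurable]: "d \<in> borel_measurable (lebesgue_on {0..pi})"
    using dm by (rule measurable_restrict_space1)
  have qm[measurable]: "q \<in> borel_measurable (lebesgue_on {0..pi})"
    using q_ai by (simp add: absolutely_integrable_measurable)
  have "(\<lambda>x. q x *\<^sub>R dd x) absolutely_integrable_on {0..pi}"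
  proof (rule measurable_bounded_by_integrable_imp_absolutely_integrable)
    show "(\<lambda>x. q x *\<^sub>R dd x) \<in> borel_measurable (lebesgue_on {0..pi})"
      unfolding dd_def by measurable
    show "(\<lambda>x. norm (q x)) integrable_on {0..pi}" using q_ai by (simp add: absolutely_integrable_on_def)
    show "norm (q x *\<^sub>R dd x) \<le> norm (q x)" for x
      by (auto simp: dd_def mult_left_le)
  qed auto
  then have "(\<lambda>x. q x *\<^sub>R g (\<nu> x)) absolutely_integrable_on {0..pi}" by (simp add: gnu)
  then have "g absolutely_integrable_on {0..pi}" using sub_ai[of 0 pi g] \<nu>0 \<nu>_pi by simp
  then show ?thesis using that gb Nd(1) rel by blast
qed

lemma omega_le: assumes "d \<in> Bap" shows "omega p d \<le> m\<^sup>2 * pi"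
proof -
  obtain g Nd where g: "g absolutely_integrable_on {0..pi}" "\<And>s. s \<in> {0..pi} \<Longrightarrow> cmod (g s) \<le> 1"
    "negligible Nd" "\<And>x. x \<notin> Nd \<Longrightarrow> g (\<nu> x) = d x" using Bap_g[OF assms] by blast
  have "omega p d = m\<^sup>2 * integral {0..pi} (\<lambda>s. cross2 (g s) (integral {s..pi} g))"
    using g by (intro reduce[of g Nd]) auto
  also have "\<dots> \<le> m\<^sup>2 * pi" using core_le[OF g(1,2)] by (intro mult_left_mono) auto
  finally show ?thesis .
qed

lemma omega_eq:
  assumes d: "d \<in> Bap" and eq: "omega p d = m\<^sup>2 * pi"
  shows "\<exists>c. AE x in lebesgue. d x = exp (\<i> * complex_of_real (\<nu> x + c))"
proof -
  obtain g Nd where g: "g absolutely_integrable_on {0..pi}" "\<And>s. s \<in> {0..pi} \<Longrightarrow> cmod (g s) \<le> 1"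
    "negligible Nd" "\<And>x. x \<notin> Nd \<Longrightarrow> g (\<nu> x) = d x" using Bap_g[OF assms(1)] by blast
  have "omega p d = m\<^sup>2 * integral {0..pi} (\<lambda>s. cross2 (g s) (integral {s..pi} g))"
    using g by (intro reduce[of g Nd]) auto
  then have "integral {0..pi} (\<lambda>s. cross2 (g s) (integral {s..pi} g)) = pi" using eq m_pos by simp
  then obtain c N0 where c: "negligible N0" "\<And>s. s \<in> {0..pi} - N0 \<Longrightarrow> g s = exp (\<i> * of_real (s + c))"
    using core_eq[OF g(1,2)] by blast
  define B where "B = {x. d x \<noteq> exp (\<i> * complex_of_real (\<nu> x + c))}"
  have inv: "x \<in> B \<longleftrightarrow> x + pi \<in> B" for x
  proof -
    have "d (x + pi) = - d x" using d by (simp add: Bap_def)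
    moreover have "exp (\<i> * complex_of_real (\<nu> (x + pi) + c)) = - exp (\<i> * complex_of_real (\<nu> x + c))"
    proof -
      have "\<i> * complex_of_real (\<nu> (x + pi) + c) = \<i> * complex_of_real (\<nu> x + c) + \<i> * of_real pi"
        unfolding \<nu>_shift by (simp add: algebra_simps)
      then show ?thesis by (simp add: exp_add)
    qed
    ultimately show ?thesis by (simp add: B_def)
  qed
  have "B \<inter> {0..pi} \<subseteq> Nd \<union> \<nu> -` N0"
  proof
    fix x assume x: "x \<in> B \<inter> {0..pi}"
    show "x \<in> Nd \<union> \<nu> -` N0"
    proof (rule ccontr)
      assume "x \<notin> Nd \<union> \<nu> -` N0"
      then have "x \<notin> Nd" "\<nu> x \<notin> N0" by auto
      moreover have "\<nu> x \<in> {0..pi}" using x \<nu>_nonneg \<nu>_le_pi by auto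
      ultimately have "d x = exp (\<i> * complex_of_real (\<nu> x + c))" using g(4)[of x] c(2)[of "\<nu> x"] by simp
      then show False using x by (simp add: B_def)
    qed
  qed
  then have "negligible (B \<inter> {0..pi})"
    using negligible_subset negligible_Un[OF g(3) \<nu>_negl_vimage[OF c(1)]] by blast
  then have "negligible B" by (rule periodic_negl[OF inv])
  then have "AE x in lebesgue. d x = exp (\<i> * complex_of_real (\<nu> x + c))"
    by (rule negl_AE) (simp add: B_def)
  then show ?thesis by blast
qed

end

lemma cross_special0: "cross2 (\<i> * of_real r * e) (- of_real (r * u) * e) = r\<^sup>2 * u * (cmod e)\<^sup>2"
proof -
  have "cnj (\<i> * of_real r * e) * (- of_real (r * u) * e) = \<i> * of_real (r\<^sup>2 * u) * (e * cnj e)"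
    by (simp add: algebra_simps power2_eq_square)
  also have "e * cnj e = of_real ((cmod e)\<^sup>2)" by (rule complex_norm_square[symmetric])
  finally have E: "cnj (\<i> * of_real r * e) * (- of_real (r * u) * e) = \<i> * of_real (r\<^sup>2 * u * (cmod e)\<^sup>2)"
    by simp
  show ?thesis unfolding cross2_Im E by simp
qed

lemma cross_special: "cross2 (\<i> * of_real r * exp (\<i> * of_real t)) (- of_real (r * u) * exp (\<i> * of_real t)) = r\<^sup>2 * u"
  using cross_special0[of r "exp (\<i> * of_real t)" u] by simp

context L39 begin

lemma sigma_eq:
  "(1/2) * (\<integral>b\<in>{a..a+pi}. complex_of_real (p b) * exp (\<i> * complex_of_real (\<nu> b)) \<partial>lebesgue)
     = \<i> * of_real m * exp (\<i> * of_real (\<nu> a))"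
proof -
  define F where "F s = exp (\<i> * complex_of_real s)" for s
  have ap: "a \<le> a + pi" by simp
  have Fi: "F absolutely_integrable_on {\<nu> a..\<nu> (a+pi)}"
    unfolding F_def by (intro absolutely_integrable_continuous_real continuous_intros)
  have s1: "(\<lambda>x. q x *\<^sub>R F (\<nu> x)) absolutely_integrable_on {a..a+pi}" using sub_ai[OF ap, of F] Fi by simp
  have s2: "integral {a..a+pi} (\<lambda>x. q x *\<^sub>R F (\<nu> x)) = integral {\<nu> a..\<nu> (a+pi)} F"
    using sub_int[OF ap, of F] Fi by simp
  have "integral {\<nu> a..\<nu> (a+pi)} F = - \<i> * (exp (\<i> * of_real (\<nu> a + pi)) - exp (\<i> * of_real (\<nu> a)))"
    unfolding F_def \<nu>_shift by (intro exp_int) simp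
  also have "\<dots> = 2 * \<i> * exp (\<i> * of_real (\<nu> a))"
    by (simp add: distrib_left exp_add)
  finally have s3: "integral {\<nu> a..\<nu> (a+pi)} F = 2 * \<i> * exp (\<i> * of_real (\<nu> a))" .
  have eqf: "(\<lambda>b. complex_of_real (p b) * exp (\<i> * complex_of_real (\<nu> b))) = (\<lambda>b. m *\<^sub>R (q b *\<^sub>R F (\<nu> b)))"
    using m_pos by (auto simp: F_def q_def scaleR_conv_of_real)
  have ai: "(\<lambda>b. m *\<^sub>R (q b *\<^sub>R F (\<nu> b))) absolutely_integrable_on {a..a+pi}"
    by (rule absolutely_integrable_scaleR_left[OF s1])
  have "(\<integral>b\<in>{a..a+pi}. complex_of_real (p b) * exp (\<i> * complex_of_real (\<nu> b)) \<partial>lebesgue)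
      = integral {a..a+pi} (\<lambda>b. m *\<^sub>R (q b *\<^sub>R F (\<nu> b)))"
    unfolding eqf by (rule set_lebesgue_integral_eq_integral(2)[OF ai])
  also have "\<dots> = m *\<^sub>R integral {a..a+pi} (\<lambda>b. q b *\<^sub>R F (\<nu> b))" by (rule integral_cmul)
  also have "\<dots> = m *\<^sub>R (2 * \<i> * exp (\<i> * of_real (\<nu> a)))" using s2 s3 by simp
  finally show ?thesis by (simp add: scaleR_conv_of_real)
qed

lemma area_val:
  "area02pi (\<lambda>a. (1/2) * (\<integral>b\<in>{a..a+pi}. complex_of_real (p b) * exp (\<i> * complex_of_real (\<nu> b)) \<partial>lebesgue))
     = m\<^sup>2 * pi"
proof -
  define \<sigma> where "\<sigma> a = \<i> * of_real m * exp (\<i> * of_real (\<nu> a))" for a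
  have se: "(\<lambda>a. (1/2) * (\<integral>b\<in>{a..a+pi}. complex_of_real (p b) * exp (\<i> * complex_of_real (\<nu> b)) \<partial>lebesgue)) = \<sigma>"
    by (rule ext) (unfold \<sigma>_def, rule sigma_eq)
  have vd: "cross2 (\<sigma> x) (vector_derivative \<sigma> (at x)) = m\<^sup>2 * q x" if x: "x \<in> S0" for x
  proof -
    have dnu: "(\<nu> has_real_derivative q x) (at x)" using x by (simp add: S0_def)
    have f: "((\<lambda>a. complex_of_real (\<nu> a)) has_vector_derivative of_real (q x)) (at x)"
      by (rule has_vector_derivative_of_real[OF dnu])
    have g: "((\<lambda>z. \<i> * of_real m * exp (\<i> * z)) has_field_derivative (\<i> * of_real m * (exp (\<i> * of_real (\<nu> x)) * \<i>))) (at (of_real (\<nu> x)))"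
    proof -
      have ii: "\<i> * (z * \<i>) = - z" for z :: complex by (simp add: mult.left_commute[of \<i> z])
      show ?thesis by (auto intro!: derivative_eq_intros simp: ii)
    qed
    have "(((\<lambda>z. \<i> * of_real m * exp (\<i> * z)) \<circ> (\<lambda>a. complex_of_real (\<nu> a))) has_vector_derivative
        (of_real (q x) * (\<i> * of_real m * (exp (\<i> * of_real (\<nu> x)) * \<i>)))) (at x)"
      by (rule field_vector_diff_chain_at[OF f g])
    moreover have "of_real (q x) * (\<i> * of_real m * (exp (\<i> * of_real (\<nu> x)) * \<i>)) = - of_real (m * q x) * exp (\<i> * of_real (\<nu> x))"
    proof -
      have "of_real (q x) * (\<i> * of_real m * (exp (\<i> * of_real (\<nu> x)) * \<i>)) = (\<i> * \<i>) * (complex_of_real (m * q x) * exp (\<i> * of_real (\<nu> x)))"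
        by (simp add: mult_ac)
      then show ?thesis by simp
    qed
    moreover have "((\<lambda>z. \<i> * of_real m * exp (\<i> * z)) \<circ> (\<lambda>a. complex_of_real (\<nu> a))) = \<sigma>"
      by (simp add: \<sigma>_def[abs_def] o_def)
    ultimately have "(\<sigma> has_vector_derivative (- of_real (m * q x) * exp (\<i> * of_real (\<nu> x)))) (at x)"
      by simp
    then have "vector_derivative \<sigma> (at x) = - of_real (m * q x) * exp (\<i> * of_real (\<nu> x))"
      by (rule vector_derivative_at)
    then show ?thesis using cross_special[of m "\<nu> x" "q x"] by (simp add: \<sigma>_def)
  qed
  have qa: "(\<lambda>x. m\<^sup>2 *\<^sub>R q x) absolutely_integrable_on {0..2*pi}"
    by (rule absolutely_integrable_scaleR_left[OF q_ai])
  have hai: "(\<lambda>x. cross2 (\<sigma> x) (vector_derivative \<sigma> (at x))) absolutely_integrable_on {0..2*pi}"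
    by (rule absolutely_integrable_spike[OF qa S0_negl]) (auto simp: vd)
  have "(\<integral>a\<in>{0..2*pi}. cross2 (\<sigma> a) (vector_derivative \<sigma> (at a)) \<partial>lebesgue)
      = integral {0..2*pi} (\<lambda>x. cross2 (\<sigma> x) (vector_derivative \<sigma> (at x)))"
    by (rule set_lebesgue_integral_eq_integral(2)[OF hai])
  also have "\<dots> = integral {0..2*pi} (\<lambda>x. m\<^sup>2 *\<^sub>R q x)"
    by (rule integral_spike[OF S0_negl]) (auto simp: vd)
  also have "\<dots> = m\<^sup>2 * (\<nu> (2*pi) - \<nu> 0)" using ftc[of 0 "2*pi"] by simp
  also have "\<dots> = m\<^sup>2 * (2 * pi)" using \<nu>_shift[of pi] \<nu>_pi \<nu>0 by simp
  finally show ?thesis unfolding se area02pi_def by simp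
qed

lemma deriv_ae:
  "AE x in lebesgue. \<exists>D. ((\<lambda>a. exp (\<i> * complex_of_real (\<nu> a + c))) has_vector_derivative D) (at x)
       \<and> cmod D = p x / m \<and> (\<nu> has_real_derivative p x / m) (at x)"
proof (rule negl_AE[OF S0_negl])
  fix x assume "x \<notin> - S0"
  then have x: "x \<in> S0" by simp
  have dnu: "(\<nu> has_real_derivative q x) (at x)" and qp: "q x > 0" using x by (auto simp: S0_def)
  have f: "((\<lambda>a. complex_of_real (\<nu> a + c)) has_vector_derivative of_real (q x)) (at x)"
    by (rule has_vector_derivative_of_real) (auto intro!: derivative_eq_intros dnu)
  have g: "((\<lambda>z. exp (\<i> * z)) has_field_derivative (exp (\<i> * of_real (\<nu> x + c)) * \<i>)) (at (of_real (\<nu> x + c)))"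
    by (auto intro!: derivative_eq_intros)
  have "(((\<lambda>z. exp (\<i> * z)) \<circ> (\<lambda>a. complex_of_real (\<nu> a + c))) has_vector_derivative
      (of_real (q x) * (exp (\<i> * of_real (\<nu> x + c)) * \<i>))) (at x)"
    by (rule field_vector_diff_chain_at[OF f g])
  then have "((\<lambda>a. exp (\<i> * complex_of_real (\<nu> a + c))) has_vector_derivative
      (of_real (q x) * (exp (\<i> * of_real (\<nu> x + c)) * \<i>))) (at x)" by (simp add: o_def)
  moreover have "cmod (of_real (q x) * (exp (\<i> * of_real (\<nu> x + c)) * \<i>)) = q x"
    using qp by (simp add: norm_mult del: of_real_add)
  ultimately show "\<exists>D. ((\<lambda>a. exp (\<i> * complex_of_real (\<nu> a + c))) has_vector_derivative D) (at x)
       \<and> cmod D = p x / m \<and> (\<nu> has_real_derivative p x / m) (at x)"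
    using dnu unfolding q_def by blast
qed

end

theorem lemma3p9:
  fixes p :: "real \<Rightarrow> real" and \<nu> :: "real \<Rightarrow> real"
  assumes p_locint: "\<And>a b. set_integrable lebesgue {a..b} p"
    and p_per: "\<And>x. p (x + pi) = p x"
    and p_pos: "AE x in lebesgue. p x > 0"
    and \<nu>_bilip: "\<exists>L>0. \<forall>x y. \<bar>x - y\<bar> \<le> L * \<bar>\<nu> x - \<nu> y\<bar> \<and> \<bar>\<nu> x - \<nu> y\<bar> \<le> L * \<bar>x - y\<bar>"
    and \<nu>0: "\<nu> 0 = 0"
    and \<nu>_deriv: "AE x in lebesgue.
          (\<nu> has_real_derivative
             p x / ((1 / (2*pi)) * (\<integral>b\<in>{0..2*pi}. p b \<partial>lebesgue))) (at x)"
  shows "(\<lambda>a. exp (\<i> * complex_of_real (\<nu> a))) \<in> Bap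
    \<and> (\<forall>d\<in>Bap. omega p d \<le> omega p (\<lambda>a. exp (\<i> * complex_of_real (\<nu> a))))
    \<and> omega p (\<lambda>a. exp (\<i> * complex_of_real (\<nu> a))) = (SUP d\<in>Bap. omega p d)
    \<and> omega p (\<lambda>a. exp (\<i> * complex_of_real (\<nu> a)))
        = area02pi (\<lambda>a. (1/2) * (\<integral>b\<in>{a..a+pi}.
              complex_of_real (p b) * exp (\<i> * complex_of_real (\<nu> b)) \<partial>lebesgue))
    \<and> omega p (\<lambda>a. exp (\<i> * complex_of_real (\<nu> a)))
        = (1 / (4*pi)) * (\<integral>b\<in>{0..2*pi}. p b \<partial>lebesgue)\<^sup>2
    \<and> (\<forall>d\<in>Bap. omega p d = (SUP e\<in>Bap. omega p e) \<longrightarrow>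
         (\<exists>c::real. (AE x in lebesgue. d x = exp (\<i> * complex_of_real (\<nu> x + c)))
            \<and> (AE x in lebesgue. \<exists>D.
                 ((\<lambda>a. exp (\<i> * complex_of_real (\<nu> a + c))) has_vector_derivative D) (at x)
                 \<and> cmod D = p x / ((1 / (2*pi)) * (\<integral>b\<in>{0..2*pi}. p b \<partial>lebesgue))
                 \<and> (\<nu> has_real_derivative
                      p x / ((1 / (2*pi)) * (\<integral>b\<in>{0..2*pi}. p b \<partial>lebesgue))) (at x))))"
proof -
  define m where "m = (1 / (2*pi)) * (\<integral>b\<in>{0..2*pi}. p b \<partial>lebesgue)"
  interpret L: L39 p \<nu> m
    by (unfold_locales) (use assms in \<open>auto simp: m_def\<close>)
  have geq: "(\<lambda>a. exp (\<i> * complex_of_real (\<nu> a))) = L.\<gamma>" by (simp add: L.\<gamma>_def[abs_def])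
  have og: "omega p L.\<gamma> = m\<^sup>2 * pi" by (rule L.omega_\<gamma>)
  have le: "\<forall>d\<in>Bap. omega p d \<le> omega p L.\<gamma>" using L.omega_le og by simp
  have sup: "(SUP d\<in>Bap. omega p d) = omega p L.\<gamma>"
    by (rule cSup_eq_maximum) (use L.\<gamma>_Bap le in auto)
  have I: "(\<integral>b\<in>{0..2*pi}. p b \<partial>lebesgue) = 2 * pi * m" using m_def by simp
  have val: "(1 / (4*pi)) * (\<integral>b\<in>{0..2*pi}. p b \<partial>lebesgue)\<^sup>2 = m\<^sup>2 * pi"
    unfolding I by (simp add: power2_eq_square field_simps)
  have maxi: "\<forall>d\<in>Bap. omega p d = (SUP e\<in>Bap. omega p e) \<longrightarrow>
         (\<exists>c::real. (AE x in lebesgue. d x = exp (\<i> * complex_of_real (\<nu> x + c)))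
            \<and> (AE x in lebesgue. \<exists>D.
                 ((\<lambda>a. exp (\<i> * complex_of_real (\<nu> a + c))) has_vector_derivative D) (at x)
                 \<and> cmod D = p x / m
                 \<and> (\<nu> has_real_derivative p x / m) (at x)))"
  proof (intro ballI impI)
    fix d assume d: "d \<in> Bap" and eq: "omega p d = (SUP e\<in>Bap. omega p e)"
    then have "omega p d = m\<^sup>2 * pi" using sup og by simp
    then obtain c where "AE x in lebesgue. d x = exp (\<i> * complex_of_real (\<nu> x + c))"
      using L.omega_eq[OF d] by blast
    then show "\<exists>c::real. (AE x in lebesgue. d x = exp (\<i> * complex_of_real (\<nu> x + c)))
            \<and> (AE x in lebesgue. \<exists>D.
                 ((\<lambda>a. exp (\<i> * complex_of_real (\<nu> a + c))) has_vector_derivative D) (at x)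
                 \<and> cmod D = p x / m
                 \<and> (\<nu> has_real_derivative p x / m) (at x))"
      using L.deriv_ae[of c] by blast
  qed
  show ?thesis
    unfolding geq m_def[symmetric]
    using L.\<gamma>_Bap le sup L.area_val og val maxi by simp
qed


end
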